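(* Let $\mathcal{G}$ be a stochastic game with vertex set $V$ and priority functions $\Omega_1,\Omega_2:V\to\mathbb{N}$, and suppose the largest $\Omega_1$-priority $d$ occurring in $\mathcal{G}$ is odd. Let $A=\mathsf{PosAttr}_2(V(\Omega_1,d))$ (computed in $\mathcal{G}$) and $B=V\setminus A$. Then the sure-almost-sure winning region of Player 1 in $\mathcal{G}$ for $\mathsf{Parity}(\Omega_1)$ and $\mathsf{Parity}(\Omega_2)$ is empty if and only if the sure-almost-sure winning region of Player 1 in the subgame $\mathcal{G}_{\upharpoonright B}$ for the same objectives is empty.
   Context: A stochastic game $\langle V,(V_1,V_2,V_\Diamond),E,\delta\rangle$ has a finite vertex set $V$ partitioned into Player-1, Player-2 and probabilistic vertices, edges $E\subseteq V\times V$ with every vertex having a successor ($E(v)$ denotes the successor set), and $\delta:V_\Diamond\to\mathcal{D}(V)$ with support of $\delta(v)$ equal to $E(v)$. A strategy for Player $i$ maps histories ending in $V_i$ to a successor of the last vertex; $\mathsf{Out}(v,\sigma_1)$ is the set of plays from $v$ consistent with $\sigma_1$, and $\mathsf{Pr}_v^{\sigma_1,\sigma_2}$ the probability measure on plays. $\mathsf{Parity}(\Omega)$ is the set of plays $v_0v_1\dots$ with $\limsup_j\Omega(v_j)$ even. A Player-1 strategy $\sigma_1$ is sure-almost-sure winning from $v$ if $\mathsf{Out}(v,\sigma_1)\subseteq\mathsf{Parity}(\Omega_1)$ and $\mathsf{Pr}_v^{\sigma_1,\sigma_2}(\mathsf{Parity}(\Omega_2))=1$ for every Player-2 strategy $\sigma_2$;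 the sure-almost-sure winning region is the set of vertices from which such a strategy exists. $V(\Omega_1,d)=\{v\mid\Omega_1(v)=d\}$. $\mathsf{PosPre}_2(U)=\{v\in V_2\cup V_\Diamond\mid E(v)\cap U\ne\emptyset\}\cup\{v\in V_1\mid E(v)\subseteq U\}$ and $\mathsf{PosAttr}_2(T)$ is the least fixed point of $X\mapsto\mathsf{PosPre}_2(X)\cup T$. The set $B=V\setminus\mathsf{PosAttr}_2(T)$ is a trap for Player 2 (every Player-1 vertex in $B$ has a successor in $B$, and all successors of Player-2 and probabilistic vertices in $B$ lie in $B$), and $\mathcal{G}_{\upharpoonright B}$ is the game restricted to vertices $B$ (edges and probabilities restricted to $B$). *)

theory Defs
  imports "HOL-Probability.Probability"
begin

record 'v game =
  verts :: "'v set"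
  V1 :: "'v set"
  V2 :: "'v set"
  Vp :: "'v set"
  edges :: "('v \<times> 'v) set"
  delta :: "'v \<Rightarrow> 'v pmf"

definition succs :: "'v game \<Rightarrow> 'v \<Rightarrow> 'v set" where
  "succs G v = {w. (v, w) \<in> edges G}"

definition stoch_game :: "'v game \<Rightarrow> bool" where
  "stoch_game G \<longleftrightarrow>
     finite (verts G) \<and>
     V1 G \<union> V2 G \<union> Vp G = verts G \<and>
     V1 G \<inter> V2 G = {} \<and> V1 G \<inter> Vp G = {} \<and> V2 G \<inter> Vp G = {} \<and>
     edges G \<subseteq> verts G \<times> verts G \<and>
     (\<forall>v\<in>verts G. succs G v \<noteq> {}) \<and>
     (\<forall>v\<in>Vp G. set_pmf (delta G v) = succs G v)"

definition strategy :: "'v game \<Rightarrow> 'v set \<Rightarrow> ('v list \<Rightarrow> 'v) \<Rightarrow> bool" where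
  "strategy G Vi \<sigma> \<longleftrightarrow> (\<forall>h. h \<noteq> [] \<and> last h \<in> Vi \<longrightarrow> \<sigma> h \<in> succs G (last h))"

definition Out :: "'v game \<Rightarrow> 'v \<Rightarrow> ('v list \<Rightarrow> 'v) \<Rightarrow> 'v stream set" where
  "Out G v \<sigma>1 = {\<rho>. \<rho> !! 0 = v \<and> (\<forall>i. (\<rho> !! i, \<rho> !! Suc i) \<in> edges G) \<and>
      (\<forall>i. \<rho> !! i \<in> V1 G \<longrightarrow> \<rho> !! Suc i = \<sigma>1 (stake (Suc i) \<rho>))}"

definition parity :: "('v \<Rightarrow> nat) \<Rightarrow> 'v stream \<Rightarrow> bool" where
  "parity \<Omega> \<rho> \<longleftrightarrow>
     (\<exists>p. even p \<and> (\<exists>\<^sub>\<infinity>j. \<Omega> (\<rho> !! j) = p) \<and> (\<forall>\<^sub>\<infinity>j. \<Omega> (\<rho> !! j) \<le> p))"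

definition trans_prob :: "'v game \<Rightarrow> ('v list \<Rightarrow> 'v) \<Rightarrow> ('v list \<Rightarrow> 'v) \<Rightarrow> 'v list \<Rightarrow> 'v \<Rightarrow> real" where
  "trans_prob G \<sigma>1 \<sigma>2 h w =
     (if last h \<in> V1 G then (if \<sigma>1 h = w then 1 else 0)
      else if last h \<in> V2 G then (if \<sigma>2 h = w then 1 else 0)
      else if last h \<in> Vp G then pmf (delta G (last h)) w
      else 0)"

definition hist_prob :: "'v game \<Rightarrow> 'v \<Rightarrow> ('v list \<Rightarrow> 'v) \<Rightarrow> ('v list \<Rightarrow> 'v) \<Rightarrow> 'v list \<Rightarrow> real" where
  "hist_prob G v \<sigma>1 \<sigma>2 h =
     (if h ! 0 = v then (\<Prod>i<length h - 1. trans_prob G \<sigma>1 \<sigma>2 (take (Suc i) h) (h ! Suc i))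
      else 0)"

definition Pr :: "'v game \<Rightarrow> 'v \<Rightarrow> ('v list \<Rightarrow> 'v) \<Rightarrow> ('v list \<Rightarrow> 'v) \<Rightarrow> 'v stream measure" where
  "Pr G v \<sigma>1 \<sigma>2 = (THE M. prob_space M \<and> sets M = sets (stream_space (count_space UNIV)) \<and>
      (\<forall>h. h \<noteq> [] \<longrightarrow> emeasure M (sstart UNIV h) = ennreal (hist_prob G v \<sigma>1 \<sigma>2 h)))"

definition sas_region :: "'v game \<Rightarrow> ('v \<Rightarrow> nat) \<Rightarrow> ('v \<Rightarrow> nat) \<Rightarrow> 'v set" where
  "sas_region G \<Omega>1 \<Omega>2 = {v \<in> verts G. \<exists>\<sigma>1. strategy G (V1 G) \<sigma>1 \<and>
      Out G v \<sigma>1 \<subseteq> {\<rho>. parity \<Omega>1 \<rho>} \<and>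
      (\<forall>\<sigma>2. strategy G (V2 G) \<sigma>2 \<longrightarrow> measure (Pr G v \<sigma>1 \<sigma>2) {\<rho>. parity \<Omega>2 \<rho>} = 1)}"

definition PosPre2 :: "'v game \<Rightarrow> 'v set \<Rightarrow> 'v set" where
  "PosPre2 G U = {v \<in> V2 G \<union> Vp G. succs G v \<inter> U \<noteq> {}} \<union> {v \<in> V1 G. succs G v \<subseteq> U}"

definition PosAttr2 :: "'v game \<Rightarrow> 'v set \<Rightarrow> 'v set" where
  "PosAttr2 G T = lfp (\<lambda>X. PosPre2 G X \<union> T)"

text \<open>Subgame restricted to the vertex set B (edges restricted to B, probability
  distributions conditioned on B; for a trap this leaves them unchanged).\<close>
definition restrict_game :: "'v game \<Rightarrow> 'v set \<Rightarrow> 'v game" where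
  "restrict_game G B =
     \<lparr> verts = verts G \<inter> B, V1 = V1 G \<inter> B, V2 = V2 G \<inter> B, Vp = Vp G \<inter> B,
       edges = edges G \<inter> (B \<times> B), delta = (\<lambda>v. cond_pmf (delta G v) B) \<rparr>"

end

theory Submission
  imports Defs
begin

definition tr :: "'v pmf \<Rightarrow> 'v \<Rightarrow> 'v" where
  "tr p x = (if x \<in> set_pmf p then x else (SOME y. y \<in> set_pmf p))"

lemma tr_in: "tr p x \<in> set_pmf p"
  unfolding tr_def using set_pmf_not_empty[of p] by (auto intro: someI_ex)

primcorec gpath :: "('v list \<Rightarrow> 'v pmf) \<Rightarrow> 'v list \<Rightarrow> ('v list \<Rightarrow> 'v) stream \<Rightarrow> 'v stream" where
  "shd (gpath K h fs) = tr (K h) (shd fs h)"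
| "stl (gpath K h fs) = gpath K (h @ [tr (K h) (shd fs h)]) (stl fs)"

definition FF :: "('v list \<Rightarrow> 'v pmf) \<Rightarrow> ('v list \<Rightarrow> 'v) measure" where
  "FF K = PiM UNIV (\<lambda>h. measure_pmf (K h))"


lemma prob_FF: "prob_space (FF K)"
  unfolding FF_def by (rule prob_space_PiM) (rule prob_space_measure_pmf)

lemma prob_SS: "prob_space (stream_space (FF K))"
  using prob_FF by (rule prob_space.prob_space_stream_space)

lemma space_FF: "space (FF K) = UNIV"
  unfolding FF_def by (simp add: space_PiM)

lemma meas_comp: "(\<lambda>f. f h) \<in> measurable (FF K) (measure_pmf (K h))"
  unfolding FF_def by (rule measurable_component_singleton) simp

lemma FF_comp: "emeasure (FF K) {f. P (f h)} = emeasure (measure_pmf (K h)) {x. P x}"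
proof -
  interpret product_prob_space "\<lambda>h. measure_pmf (K h)" UNIV by unfold_locales
  have "emeasure (FF K) {f. P (f h)} = emeasure (distr (FF K) (measure_pmf (K h)) (\<lambda>f. f h)) {x. P x}"
    using meas_comp[of h K] by (subst emeasure_distr) (auto simp: space_FF vimage_def)
  also have "distr (FF K) (measure_pmf (K h)) (\<lambda>f. f h) = measure_pmf (K h)"
    unfolding FF_def by (rule PiM_component) simp
  finally show ?thesis .
qed

abbreviation SS :: "('v list \<Rightarrow> 'v pmf) \<Rightarrow> ('v list \<Rightarrow> 'v) stream measure" where
  "SS K \<equiv> stream_space (FF K)"

lemma emeasure_pmf_tr: "emeasure (measure_pmf p) {x. tr p x = w} = pmf p w"
proof -
  have "emeasure (measure_pmf p) {x. tr p x = w} = emeasure (measure_pmf p) {w}"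
    by (rule emeasure_eq_AE) (auto simp: AE_measure_pmf_iff tr_def)
  then show ?thesis by (simp add: emeasure_pmf_single)
qed

lemma cyl_path:
  "{fs \<in> space (SS K). gpath K h fs \<in> sstart UNIV ws} \<in> sets (SS K) \<and>
   emeasure (SS K) {fs \<in> space (SS K). gpath K h fs \<in> sstart UNIV ws} =
     ennreal (\<Prod>i<length ws. pmf (K (h @ take i ws)) (ws ! i))"
proof (induction ws arbitrary: h)
  case Nil
  interpret S: prob_space "SS K" by (rule prob_SS)
  show ?case by (simp add: S.emeasure_space_1)
next
  case (Cons w ws)
  interpret F: prob_space "FF K" by (rule prob_FF)
  let ?X = "{fs \<in> space (SS K). gpath K (h @ [w]) fs \<in> sstart UNIV ws}"
  have X: "?X \<in> sets (SS K)" using Cons.IH by blast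
  have eq: "{fs \<in> space (SS K). gpath K h fs \<in> sstart UNIV (w # ws)} =
     {fs \<in> space (SS K). tr (K h) (shd fs h) = w \<and> stl fs \<in> ?X}"
    by (auto simp: space_stream_space streams_stl)
  have m1: "(\<lambda>fs. tr (K h) (shd fs h)) \<in> measurable (SS K) (count_space UNIV)"
  proof -
    have "(\<lambda>fs. shd fs h) \<in> measurable (SS K) (measure_pmf (K h))"
      using measurable_shd meas_comp by (rule measurable_compose)
    moreover have "tr (K h) \<in> measurable (measure_pmf (K h)) (count_space UNIV)" by simp
    ultimately show ?thesis by (rule measurable_compose)
  qed
  have S1: "{fs \<in> space (SS K). tr (K h) (shd fs h) = w \<and> stl fs \<in> ?X} \<in> sets (SS K)"
    using m1 X by measurable
  have "emeasure (SS K) {fs \<in> space (SS K). tr (K h) (shd fs h) = w \<and> stl fs \<in> ?X} =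
    (\<integral>\<^sup>+f. emeasure (SS K) {x \<in> space (SS K). f ## x \<in> {fs \<in> space (SS K). tr (K h) (shd fs h) = w \<and> stl fs \<in> ?X}} \<partial>FF K)"
    using S1 by (rule F.emeasure_stream_space)
  also have "\<dots> = (\<integral>\<^sup>+f. emeasure (SS K) ?X * indicator {f \<in> space (FF K). tr (K h) (f h) = w} f \<partial>FF K)"
  proof (rule nn_integral_cong)
    fix f assume "f \<in> space (FF K)"
    show "emeasure (SS K) {x \<in> space (SS K). f ## x \<in> {fs \<in> space (SS K). tr (K h) (shd fs h) = w \<and> stl fs \<in> ?X}} =
       emeasure (SS K) ?X * indicator {f \<in> space (FF K). tr (K h) (f h) = w} f"
      by (cases "tr (K h) (f h) = w") (auto simp: space_stream_space space_FF intro!: arg_cong2[where f=emeasure])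
  qed
  also have "\<dots> = emeasure (SS K) ?X * emeasure (FF K) {f \<in> space (FF K). tr (K h) (f h) = w}"
  proof (rule nn_integral_cmult_indicator)
    have "(\<lambda>f. tr (K h) (f h)) \<in> measurable (FF K) (count_space UNIV)"
      using meas_comp by (rule measurable_compose) simp
    then show "{f \<in> space (FF K). tr (K h) (f h) = w} \<in> sets (FF K)" by measurable
  qed
  also have "emeasure (FF K) {f \<in> space (FF K). tr (K h) (f h) = w} = pmf (K h) w"
    using FF_comp[of K "\<lambda>x. tr (K h) x = w" h] emeasure_pmf_tr by (simp add: space_FF)
  finally have "emeasure (SS K) {fs \<in> space (SS K). gpath K h fs \<in> sstart UNIV (w # ws)} =
     ennreal (\<Prod>i<length ws. pmf (K ((h @ [w]) @ take i ws)) (ws ! i)) * ennreal (pmf (K h) w)"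
    using Cons.IH eq by simp
  also have "\<dots> = ennreal (\<Prod>i<length (w # ws). pmf (K (h @ take i (w # ws))) ((w # ws) ! i))"
    by (simp only: length_Cons prod.lessThan_Suc_shift)
       (simp add: ennreal_mult'[symmetric] mult.commute prod_nonneg del: prod.lessThan_Suc)
  finally show ?case using S1 eq by simp
qed

fun reach :: "('v list \<Rightarrow> 'v pmf) \<Rightarrow> 'v list \<Rightarrow> nat \<Rightarrow> 'v set" where
  "reach K h 0 = set_pmf (K h)"
| "reach K h (Suc n) = (\<Union>w\<in>set_pmf (K h). reach K (h @ [w]) n)"

lemma countable_reach: "countable (reach K h n)"
  by (induction n arbitrary: h) auto

lemma path_reach: "gpath K h fs !! n \<in> reach K h n"
  by (induction n arbitrary: h fs) (auto simp: tr_in intro!: bexI[of _ "tr (K h) (shd fs h)" for h fs])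

lemma m_tr: "(\<lambda>fs. tr (K h) (shd fs h)) \<in> measurable (SS K) (count_space UNIV)"
proof -
  have "(\<lambda>fs. shd fs h) \<in> measurable (SS K) (measure_pmf (K h))"
    using measurable_shd meas_comp by (rule measurable_compose)
  moreover have "tr (K h) \<in> measurable (measure_pmf (K h)) (count_space UNIV)" by simp
  ultimately show ?thesis by (rule measurable_compose)
qed

lemma path_snth_sets: "{fs \<in> space (SS K). gpath K h fs !! n = a} \<in> sets (SS K)"
proof (induction n arbitrary: h)
  case 0
  show ?case using m_tr[of K h] by simp measurable
next
  case (Suc n)
  have eq: "{fs \<in> space (SS K). gpath K h fs !! Suc n = a} =
    (\<Union>w\<in>set_pmf (K h). {fs \<in> space (SS K). tr (K h) (shd fs h) = w \<and>
        stl fs \<in> {fs \<in> space (SS K). gpath K (h @ [w]) fs !! n = a}})"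
    using tr_in by (auto simp: space_stream_space streams_stl)
  show ?case unfolding eq
  proof (rule sets.countable_UN')
    show "countable (set_pmf (K h))" by simp
    show "(\<lambda>w. {fs \<in> space (SS K). tr (K h) (shd fs h) = w \<and>
        stl fs \<in> {fs \<in> space (SS K). gpath K (h @ [w]) fs !! n = a}}) ` set_pmf (K h) \<subseteq> sets (SS K)"
    proof safe
      fix w
      note Suc.IH[of "h @ [w]"] m_tr[of K h]
      then show "{fs \<in> space (SS K). tr (K h) (shd fs h) = w \<and>
        stl fs \<in> {fs \<in> space (SS K). gpath K (h @ [w]) fs !! n = a}} \<in> sets (SS K)"
        by measurable
    qed
  qed
qed

lemma path_snth_meas: "(\<lambda>fs. gpath K h fs !! n) \<in> measurable (SS K) (count_space UNIV)"
proof -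
  have "(\<lambda>fs. gpath K h fs !! n) \<in> measurable (SS K) (count_space (reach K h n))"
  proof (rule iffD2[OF measurable_count_space_eq_countable[OF countable_reach]], intro conjI ballI)
    show "(\<lambda>fs. gpath K h fs !! n) \<in> space (SS K) \<rightarrow> reach K h n" using path_reach by blast
    fix a
    have "(\<lambda>fs. gpath K h fs !! n) -` {a} \<inter> space (SS K) = {fs \<in> space (SS K). gpath K h fs !! n = a}" by blast
    then show "(\<lambda>fs. gpath K h fs !! n) -` {a} \<inter> space (SS K) \<in> sets (SS K)"
      using path_snth_sets[of K h n a] by (simp only:)
  qed
  moreover have "(\<lambda>x. x) \<in> measurable (count_space (reach K h n)) (count_space UNIV)"
    by (rule iffD2[OF measurable_count_space_eq1]) simp
  ultimately show ?thesis by (rule measurable_compose)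
qed

lemma path_meas: "(\<lambda>fs. v ## gpath K h fs) \<in> measurable (SS K) (stream_space (count_space UNIV))"
proof -
  have p: "gpath K h \<in> measurable (SS K) (stream_space (count_space UNIV))"
    by (rule measurable_stream_space2) (rule path_snth_meas)
  have c: "(\<lambda>fs. v) \<in> measurable (SS K) (count_space UNIV)" by simp
  show ?thesis using measurable_Stream[OF c p] .
qed

lemma exists_path_measure:
  "\<exists>M. prob_space M \<and> sets M = sets (stream_space (count_space UNIV)) \<and>
     (\<forall>x. x \<noteq> [] \<longrightarrow> emeasure M (sstart UNIV x) =
        ennreal (if x ! 0 = v then \<Prod>i<length x - 1. pmf (K (take (Suc i) x)) (x ! Suc i) else 0))"
proof (intro exI conjI allI impI)
  let ?M = "distr (SS K) (stream_space (count_space UNIV)) (\<lambda>fs. v ## gpath K [v] fs)"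
  interpret S: prob_space "SS K" by (rule prob_SS)
  show "prob_space ?M" using path_meas by (rule S.prob_space_distr)
  show "sets ?M = sets (stream_space (count_space UNIV))" by simp
  fix x :: "'a list" assume "x \<noteq> []"
  then obtain w ws where x: "x = w # ws" by (cases x) auto
  have "emeasure ?M (sstart UNIV x) = emeasure (SS K) ((\<lambda>fs. v ## gpath K [v] fs) -` sstart UNIV x \<inter> space (SS K))"
    using path_meas by (rule emeasure_distr) simp
  also have "\<dots> = ennreal (if x ! 0 = v then \<Prod>i<length x - 1. pmf (K (take (Suc i) x)) (x ! Suc i) else 0)"
  proof (cases "w = v")
    case True
    have "(\<lambda>fs. v ## gpath K [v] fs) -` sstart UNIV x \<inter> space (SS K) = {fs \<in> space (SS K). gpath K [v] fs \<in> sstart UNIV ws}"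
      using True x by (auto simp: space_stream_space)
    then show ?thesis using cyl_path[of K "[v]" ws] True x by simp
  next
    case False
    have "(\<lambda>fs. v ## gpath K [v] fs) -` sstart UNIV x \<inter> space (SS K) = {}"
      using False x by auto
    then show ?thesis using x False by simp
  qed
  finally show "emeasure ?M (sstart UNIV x) = ennreal (if x ! 0 = v then \<Prod>i<length x - 1. pmf (K (take (Suc i) x)) (x ! Suc i) else 0)" .
qed

definition pspec :: "'v game \<Rightarrow> 'v \<Rightarrow> ('v list \<Rightarrow> 'v) \<Rightarrow> ('v list \<Rightarrow> 'v) \<Rightarrow> 'v stream measure \<Rightarrow> bool" where
  "pspec G v \<sigma>1 \<sigma>2 M \<longleftrightarrow> prob_space M \<and> sets M = sets (stream_space (count_space UNIV)) \<and>
      (\<forall>h. h \<noteq> [] \<longrightarrow> emeasure M (sstart UNIV h) = ennreal (hist_prob G v \<sigma>1 \<sigma>2 h))"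

lemma Pr_pspec_def: "Pr G v \<sigma>1 \<sigma>2 = (THE M. pspec G v \<sigma>1 \<sigma>2 M)"
  unfolding Pr_def pspec_def ..

lemma prod_first_zero:
  fixes a b :: "nat \<Rightarrow> real"
  assumes "\<And>i. i < n \<Longrightarrow> (\<forall>j<i. a j \<noteq> 0) \<Longrightarrow> a i = b i"
  shows "(\<Prod>i<n. a i) = (\<Prod>i<n. b i)"
  using assms
proof (induction n)
  case 0 then show ?case by simp
next
  case (Suc n)
  have IH: "(\<Prod>i<n. a i) = (\<Prod>i<n. b i)"
  proof (rule Suc.IH)
    fix i assume "i < n" "\<forall>j<i. a j \<noteq> 0"
    then show "a i = b i" using Suc.prems[of i] by simp
  qed
  show ?case
  proof (cases "\<forall>j<n. a j \<noteq> 0")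
    case True
    then have "a n = b n" using Suc.prems[of n] by simp
    then show ?thesis using IH by simp
  next
    case False
    then obtain j where j: "j < n" "a j = 0" by auto
    define j0 where "j0 = (LEAST j. a j = 0)"
    have j0: "a j0 = 0" "j0 \<le> j" using j unfolding j0_def by (auto intro: LeastI Least_le)
    have "\<forall>k<j0. a k \<noteq> 0" unfolding j0_def using not_less_Least by blast
    moreover have "j0 < Suc n" using j j0 by simp
    ultimately have "b j0 = 0" using Suc.prems[of j0] j0 by simp
    then have pb: "(\<Prod>i<n. b i) = 0" using j j0 by (intro prod_zero) auto
    have pa: "(\<Prod>i<n. a i) = 0" using j by (intro prod_zero) auto
    show ?thesis unfolding prod.lessThan_Suc pa pb by simp
  qed
qed

lemma strategyD: "strategy G Vi \<sigma> \<Longrightarrow> h \<noteq> [] \<Longrightarrow> last h \<in> Vi \<Longrightarrow> \<sigma> h \<in> succs G (last h)"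
  unfolding strategy_def by blast

lemma succs_verts: "stoch_game G \<Longrightarrow> w \<in> succs G x \<Longrightarrow> w \<in> verts G \<and> x \<in> verts G"
  unfolding stoch_game_def succs_def by auto

lemma trans_prob_nonneg: "trans_prob G \<sigma>1 \<sigma>2 h w \<ge> 0"
  unfolding trans_prob_def by auto

lemma hist_prob_nonneg: "hist_prob G v \<sigma>1 \<sigma>2 h \<ge> 0"
  unfolding hist_prob_def by (auto intro!: prod_nonneg trans_prob_nonneg)

lemma trans_nz:
  assumes "stoch_game G" "strategy G (V1 G) \<sigma>1" "strategy G (V2 G) \<sigma>2" "h \<noteq> []"
    and "trans_prob G \<sigma>1 \<sigma>2 h w \<noteq> 0"
  shows "w \<in> succs G (last h)"
proof -
  have Vp: "\<forall>x\<in>Vp G. set_pmf (delta G x) = succs G x" using assms(1) unfolding stoch_game_def by blast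
  show ?thesis
    using assms(5) strategyD[OF assms(2,4)] strategyD[OF assms(3,4)] Vp
    unfolding trans_prob_def by (auto split: if_splits simp flip: set_pmf_iff)
qed

lemma hist_snoc:
  assumes "h \<noteq> []"
  shows "hist_prob G v \<sigma>1 \<sigma>2 (h @ [w]) = hist_prob G v \<sigma>1 \<sigma>2 h * trans_prob G \<sigma>1 \<sigma>2 h w"
proof -
  have h0: "(h @ [w]) ! 0 = h ! 0" using assms by (simp add: nth_append)
  obtain n where n: "length h = Suc n" using assms by (cases h) auto
  have "(\<Prod>i<length (h @ [w]) - 1. trans_prob G \<sigma>1 \<sigma>2 (take (Suc i) (h @ [w])) ((h @ [w]) ! Suc i))
      = (\<Prod>i<Suc n. trans_prob G \<sigma>1 \<sigma>2 (take (Suc i) (h @ [w])) ((h @ [w]) ! Suc i))"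
    using n by simp
  also have "\<dots> = (\<Prod>i<n. trans_prob G \<sigma>1 \<sigma>2 (take (Suc i) (h @ [w])) ((h @ [w]) ! Suc i)) *
       trans_prob G \<sigma>1 \<sigma>2 (take (Suc n) (h @ [w])) ((h @ [w]) ! Suc n)"
    by (rule prod.lessThan_Suc)
  also have "(\<Prod>i<n. trans_prob G \<sigma>1 \<sigma>2 (take (Suc i) (h @ [w])) ((h @ [w]) ! Suc i)) =
      (\<Prod>i<n. trans_prob G \<sigma>1 \<sigma>2 (take (Suc i) h) (h ! Suc i))"
    by (rule prod.cong) (use n in \<open>auto simp: nth_append\<close>)
  also have "take (Suc n) (h @ [w]) = h" using n by simp
  also have "(h @ [w]) ! Suc n = w" using n by (simp add: nth_append)
  finally show ?thesis using h0 n unfolding hist_prob_def by simp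
qed

lemma sum_trans:
  assumes G: "stoch_game G" and s: "strategy G (V1 G) \<sigma>1" "strategy G (V2 G) \<sigma>2"
    and h: "h \<noteq> []" "last h \<in> verts G"
  shows "(\<Sum>w\<in>verts G. trans_prob G \<sigma>1 \<sigma>2 h w) = 1"
proof -
  have fin: "finite (verts G)" and part: "V1 G \<union> V2 G \<union> Vp G = verts G"
    and Vp: "\<forall>x\<in>Vp G. set_pmf (delta G x) = succs G x" using G unfolding stoch_game_def by blast+
  consider "last h \<in> V1 G" | "last h \<notin> V1 G" "last h \<in> V2 G" | "last h \<notin> V1 G" "last h \<notin> V2 G" "last h \<in> Vp G"
    using h part by blast
  then show ?thesis
  proof cases
    case 1
    then have "\<sigma>1 h \<in> verts G" using strategyD[OF s(1) h(1)] succs_verts[OF G] by blast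
    then show ?thesis using 1 fin unfolding trans_prob_def by (simp add: sum.delta)
  next
    case 2
    then have "\<sigma>2 h \<in> verts G" using strategyD[OF s(2) h(1)] succs_verts[OF G] by blast
    then show ?thesis using 2 fin unfolding trans_prob_def by (simp add: sum.delta)
  next
    case 3
    have "set_pmf (delta G (last h)) \<subseteq> verts G" using 3 Vp succs_verts[OF G] by blast
    then show ?thesis using 3 fin sum_pmf_eq_1 unfolding trans_prob_def by simp
  qed
qed

lemma in_sstart_UNIV: "\<rho> \<in> sstart UNIV h \<longleftrightarrow> (\<forall>i<length h. \<rho> !! i = h ! i)"
  by (rule sstart_eq) simp

lemma sstart_S: "set xs \<subseteq> S \<Longrightarrow> sstart S xs = sstart UNIV xs \<inter> streams S"
proof (intro set_eqI iffI)
  fix \<rho> assume "set xs \<subseteq> S" "\<rho> \<in> sstart S xs"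
  moreover have "\<rho> \<in> streams S" using sstart_in_streams[of xs S] \<open>set xs \<subseteq> S\<close> \<open>\<rho> \<in> sstart S xs\<close> by auto
  ultimately show "\<rho> \<in> sstart UNIV xs \<inter> streams S" by (simp add: sstart_eq in_sstart_UNIV)
next
  fix \<rho> assume "\<rho> \<in> sstart UNIV xs \<inter> streams S"
  then show "\<rho> \<in> sstart S xs" by (simp add: sstart_eq in_sstart_UNIV)
qed

lemma last_take_Suc: "i < length x \<Longrightarrow> last (take (Suc i) x) = x ! i"
proof -
  assume i: "i < length x"
  then have ne: "take (Suc i) x \<noteq> []" by (cases x) auto
  have len: "length (take (Suc i) x) = Suc i" using i by simp
  show ?thesis using last_conv_nth[OF ne] len i by simp
qed

lemma take_Suc_ne: "x \<noteq> [] \<Longrightarrow> take (Suc i) x \<noteq> []"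
  by simp

lemma hist_single: "hist_prob G v \<sigma>1 \<sigma>2 [w] = (if w = v then 1 else 0)"
  unfolding hist_prob_def by simp

lemma Lsuc_eq: "{h. set h \<subseteq> S \<and> length h = Suc (Suc n)} =
   (\<lambda>(h, w). h @ [w]) ` ({h. set h \<subseteq> S \<and> length h = Suc n} \<times> S)"
proof (intro set_eqI iffI)
  fix x assume "x \<in> {h. set h \<subseteq> S \<and> length h = Suc (Suc n)}"
  then obtain y ys where "x = ys @ [y]" "length ys = Suc n" "set x \<subseteq> S"
    by (auto simp: length_Suc_conv_rev)
  then show "x \<in> (\<lambda>(h, w). h @ [w]) ` ({h. set h \<subseteq> S \<and> length h = Suc n} \<times> S)"
    by (auto intro!: image_eqI[of _ _ "(ys, y)"])
qed auto

lemma sum_hist: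
  assumes G: "stoch_game G" and s: "strategy G (V1 G) \<sigma>1" "strategy G (V2 G) \<sigma>2" and v: "v \<in> verts G"
  shows "(\<Sum>h\<in>{h. set h \<subseteq> verts G \<and> length h = Suc n}. hist_prob G v \<sigma>1 \<sigma>2 h) = 1"
proof (induction n)
  case 0
  have fin: "finite (verts G)" using G unfolding stoch_game_def by blast
  have "{h. set h \<subseteq> verts G \<and> length h = Suc 0} = (\<lambda>w. [w]) ` verts G"
    by (auto simp: length_Suc_conv)
  then have "(\<Sum>h\<in>{h. set h \<subseteq> verts G \<and> length h = Suc 0}. hist_prob G v \<sigma>1 \<sigma>2 h) =
      (\<Sum>w\<in>verts G. hist_prob G v \<sigma>1 \<sigma>2 [w])"
    by (simp add: sum.reindex inj_on_def)
  also have "\<dots> = 1" using fin v by (simp add: hist_single)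
  finally show ?case .
next
  case (Suc n)
  let ?L = "{h. set h \<subseteq> verts G \<and> length h = Suc n}"
  have fin: "finite (verts G)" using G unfolding stoch_game_def by blast
  have inj: "inj_on (\<lambda>(h, w). h @ [w]) (?L \<times> verts G)" by (auto simp: inj_on_def)
  have "(\<Sum>h\<in>{h. set h \<subseteq> verts G \<and> length h = Suc (Suc n)}. hist_prob G v \<sigma>1 \<sigma>2 h) =
     (\<Sum>(h, w)\<in>?L \<times> verts G. hist_prob G v \<sigma>1 \<sigma>2 (h @ [w]))"
    unfolding Lsuc_eq by (subst sum.reindex[OF inj]) (simp add: case_prod_unfold)
  also have "\<dots> = (\<Sum>h\<in>?L. \<Sum>w\<in>verts G. hist_prob G v \<sigma>1 \<sigma>2 h * trans_prob G \<sigma>1 \<sigma>2 h w)"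
    by (subst sum.cartesian_product[symmetric]) (auto intro!: sum.cong hist_snoc)
  also have "\<dots> = (\<Sum>h\<in>?L. hist_prob G v \<sigma>1 \<sigma>2 h)"
  proof (rule sum.cong[OF refl])
    fix h assume h: "h \<in> ?L"
    then have hn: "h \<noteq> []" by auto
    then have hl: "last h \<in> verts G" using h last_in_set[of h] by auto
    show "(\<Sum>w\<in>verts G. hist_prob G v \<sigma>1 \<sigma>2 h * trans_prob G \<sigma>1 \<sigma>2 h w) = hist_prob G v \<sigma>1 \<sigma>2 h"
      using sum_trans[OF G s hn hl] by (simp add: sum_distrib_left[symmetric])
  qed
  finally show ?case using Suc.IH by simp
qed

lemma sets_sstart_M: "sets M = sets (stream_space (count_space UNIV)) \<Longrightarrow> sstart UNIV h \<in> sets M"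
  by simp

lemma AE_streams:
  assumes G: "stoch_game G" and s: "strategy G (V1 G) \<sigma>1" "strategy G (V2 G) \<sigma>2" and v: "v \<in> verts G"
    and M: "pspec G v \<sigma>1 \<sigma>2 M"
  shows "AE \<rho> in M. \<rho> \<in> streams (verts G)"
proof -
  interpret M: prob_space M using M unfolding pspec_def by blast
  have setsM: "sets M = sets (stream_space (count_space UNIV))" using M unfolding pspec_def by blast
  have cyl: "\<And>h. h \<noteq> [] \<Longrightarrow> emeasure M (sstart UNIV h) = ennreal (hist_prob G v \<sigma>1 \<sigma>2 h)"
    using M unfolding pspec_def by blast
  have fin: "finite (verts G)" using G unfolding stoch_game_def by blast
  define L where "L n = {h. set h \<subseteq> verts G \<and> length h = Suc n}" for n
  have finL: "finite (L n)" for n unfolding L_def by (rule finite_lists_length_eq[OF fin])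
  have "AE \<rho> in M. \<rho> \<in> (\<Union>h\<in>L n. sstart UNIV h)" for n
  proof -
    have sets: "(\<lambda>h. sstart UNIV h) ` L n \<subseteq> sets M" using sets_sstart_M[OF setsM] by blast
    have disj: "disjoint_family_on (\<lambda>h. sstart UNIV h) (L n)"
      unfolding disjoint_family_on_def
    proof (intro ballI impI)
      fix h h' assume "h \<in> L n" "h' \<in> L n" "h \<noteq> h'"
      then have len: "length h = length h'" unfolding L_def by simp
      show "sstart UNIV h \<inter> sstart UNIV h' = {}"
      proof (rule ccontr)
        assume "sstart UNIV h \<inter> sstart UNIV h' \<noteq> {}"
        then obtain \<rho> where "\<rho> \<in> sstart UNIV h" "\<rho> \<in> sstart UNIV h'" by blast
        then have "\<forall>i<length h. h ! i = h' ! i" using len unfolding in_sstart_UNIV by metis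
        then have "h = h'" using len by (simp add: nth_equalityI)
        then show False using \<open>h \<noteq> h'\<close> by simp
      qed
    qed
    have "emeasure M (\<Union>h\<in>L n. sstart UNIV h) = (\<Sum>h\<in>L n. emeasure M (sstart UNIV h))"
      by (rule sum_emeasure[OF sets disj finL, symmetric])
    also have "\<dots> = (\<Sum>h\<in>L n. ennreal (hist_prob G v \<sigma>1 \<sigma>2 h))"
      by (rule sum.cong[OF refl], rule cyl) (auto simp: L_def)
    also have "\<dots> = ennreal (\<Sum>h\<in>L n. hist_prob G v \<sigma>1 \<sigma>2 h)"
      by (rule sum_ennreal) (rule hist_prob_nonneg)
    also have "\<dots> = 1" unfolding L_def using sum_hist[OF G s v] by simp
    finally have e: "emeasure M (\<Union>h\<in>L n. sstart UNIV h) = 1" .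
    have inS: "(\<Union>h\<in>L n. sstart UNIV h) \<in> sets M" by (rule sets.finite_UN[OF finL]) (use sets in blast)
    show ?thesis using e inS M.AE_in_set_eq_1[OF inS] by (simp add: M.emeasure_eq_measure)
  qed
  then have "AE \<rho> in M. \<forall>n. \<rho> \<in> (\<Union>h\<in>L n. sstart UNIV h)" by (simp add: AE_all_countable)
  then show ?thesis
  proof (rule AE_mp, intro AE_I2 impI)
    fix \<rho> assume a: "\<forall>n. \<rho> \<in> (\<Union>h\<in>L n. sstart UNIV h)"
    show "\<rho> \<in> streams (verts G)" unfolding streams_iff_snth
    proof
      fix n
      from a obtain h where "h \<in> L n" "\<rho> \<in> sstart UNIV h" by blast
      then show "\<rho> !! n \<in> verts G" unfolding L_def by (auto simp: in_sstart_UNIV)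
    qed
  qed
qed

lemma spec_unique:
  assumes G: "stoch_game G" and s: "strategy G (V1 G) \<sigma>1" "strategy G (V2 G) \<sigma>2" and v: "v \<in> verts G"
    and M: "pspec G v \<sigma>1 \<sigma>2 M" and N: "pspec G v \<sigma>1 \<sigma>2 N"
  shows "M = N"
proof -
  have fin: "finite (verts G)" using G unfolding stoch_game_def by blast
  have aM: "AE \<rho> in M. \<rho> \<in> streams (verts G)" by (rule AE_streams[OF G s v M])
  have aN: "AE \<rho> in N. \<rho> \<in> streams (verts G)" by (rule AE_streams[OF G s v N])
  have sM: "sets M = sets (stream_space (count_space UNIV))" using M unfolding pspec_def by blast
  have sN: "sets N = sets (stream_space (count_space UNIV))" using N unfolding pspec_def by blast
  show ?thesis
  proof (rule stream_space_eq_sstart[of "verts G"])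
    show "countable (verts G)" using fin by (rule countable_finite)
    show "prob_space M" "prob_space N" using M N unfolding pspec_def by blast+
    show "AE x in M. x \<in> streams (verts G)" "AE x in N. x \<in> streams (verts G)" by fact+
    show "sets M = sets (stream_space (count_space UNIV))" "sets N = sets (stream_space (count_space UNIV))" by fact+
    fix xs assume xs: "xs \<noteq> []" "xs \<in> lists (verts G)"
    have ss: "sstart (verts G) xs = sstart UNIV xs \<inter> streams (verts G)" using xs by (intro sstart_S) auto
    have str: "streams (verts G) \<in> sets (stream_space (count_space UNIV))"
      by (rule streams_sets) simp
    have "emeasure M (sstart (verts G) xs) = emeasure M (sstart UNIV xs)"
      unfolding ss by (rule emeasure_eq_AE) (use aM sM str in auto)
    also have "\<dots> = emeasure N (sstart UNIV xs)" using M N xs unfolding pspec_def by simp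
    also have "\<dots> = emeasure N (sstart (verts G) xs)"
      unfolding ss by (rule emeasure_eq_AE) (use aN sN str in auto)
    finally show "emeasure M (sstart (verts G) xs) = emeasure N (sstart (verts G) xs)" .
  qed
qed

lemma Pr_eq:
  assumes G: "stoch_game G" and s: "strategy G (V1 G) \<sigma>1" "strategy G (V2 G) \<sigma>2" and v: "v \<in> verts G"
    and M: "pspec G v \<sigma>1 \<sigma>2 M"
  shows "Pr G v \<sigma>1 \<sigma>2 = M"
  unfolding Pr_pspec_def
proof (rule the_equality[where P="pspec G v \<sigma>1 \<sigma>2", OF M])
  fix N assume "pspec G v \<sigma>1 \<sigma>2 N"
  then show "N = M" using spec_unique[OF G s v _ M] by blast
qed

definition Kg :: "'v game \<Rightarrow> ('v list \<Rightarrow> 'v) \<Rightarrow> ('v list \<Rightarrow> 'v) \<Rightarrow> 'v list \<Rightarrow> 'v pmf" where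
  "Kg G \<sigma>1 \<sigma>2 h = (if last h \<in> V1 G then return_pmf (\<sigma>1 h) else if last h \<in> V2 G then return_pmf (\<sigma>2 h)
      else if last h \<in> Vp G then delta G (last h) else return_pmf undefined)"

lemma trans_Kg: "last h \<in> verts G \<Longrightarrow> stoch_game G \<Longrightarrow> trans_prob G \<sigma>1 \<sigma>2 h w = pmf (Kg G \<sigma>1 \<sigma>2 h) w"
  unfolding trans_prob_def Kg_def stoch_game_def by (auto simp: indicator_def)

lemma hist_Kg:
  assumes G: "stoch_game G" and s: "strategy G (V1 G) \<sigma>1" "strategy G (V2 G) \<sigma>2" and v: "v \<in> verts G"
    and x: "x \<noteq> []"
  shows "hist_prob G v \<sigma>1 \<sigma>2 x = (if x ! 0 = v then \<Prod>i<length x - 1. pmf (Kg G \<sigma>1 \<sigma>2 (take (Suc i) x)) (x ! Suc i) else 0)"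
proof (cases "x ! 0 = v")
  case False then show ?thesis unfolding hist_prob_def by simp
next
  case True
  have "(\<Prod>i<length x - 1. trans_prob G \<sigma>1 \<sigma>2 (take (Suc i) x) (x ! Suc i)) =
     (\<Prod>i<length x - 1. pmf (Kg G \<sigma>1 \<sigma>2 (take (Suc i) x)) (x ! Suc i))"
  proof (rule prod_first_zero)
    fix i assume i: "i < length x - 1" and nz: "\<forall>j<i. trans_prob G \<sigma>1 \<sigma>2 (take (Suc j) x) (x ! Suc j) \<noteq> 0"
    have "x ! i \<in> verts G"
    proof (cases i)
      case 0 then show ?thesis using True v by simp
    next
      case (Suc j)
      then have "trans_prob G \<sigma>1 \<sigma>2 (take (Suc j) x) (x ! Suc j) \<noteq> 0" using nz by simp
      then have "x ! Suc j \<in> succs G (last (take (Suc j) x))" using trans_nz[OF G s] x by simp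
      then show ?thesis using Suc succs_verts[OF G] by blast
    qed
    then have "last (take (Suc i) x) \<in> verts G" using last_take_Suc[of i x] i by simp
    then show "trans_prob G \<sigma>1 \<sigma>2 (take (Suc i) x) (x ! Suc i) = pmf (Kg G \<sigma>1 \<sigma>2 (take (Suc i) x)) (x ! Suc i)"
      using trans_Kg[OF _ G] by blast
  qed
  then show ?thesis using True unfolding hist_prob_def by simp
qed

lemma Pr_spec:
  assumes G: "stoch_game G" and s: "strategy G (V1 G) \<sigma>1" "strategy G (V2 G) \<sigma>2" and v: "v \<in> verts G"
  shows "pspec G v \<sigma>1 \<sigma>2 (Pr G v \<sigma>1 \<sigma>2)"
proof -
  obtain M where M: "prob_space M" "sets M = sets (stream_space (count_space UNIV))"
     "\<forall>x. x \<noteq> [] \<longrightarrow> emeasure M (sstart UNIV x) =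
        ennreal (if x ! 0 = v then \<Prod>i<length x - 1. pmf (Kg G \<sigma>1 \<sigma>2 (take (Suc i) x)) (x ! Suc i) else 0)"
    using exists_path_measure[of v "Kg G \<sigma>1 \<sigma>2"] by blast
  have "pspec G v \<sigma>1 \<sigma>2 M" unfolding pspec_def using M hist_Kg[OF G s v] by simp
  then show ?thesis using Pr_eq[OF G s v] by simp
qed

lemma mono_F: "mono (\<lambda>X. PosPre2 G X \<union> T)"
  unfolding mono_def PosPre2_def by blast

lemma trap:
  assumes G: "stoch_game G" and A: "A = PosAttr2 G T" and B: "B = verts G - A" and x: "x \<in> B"
  shows "x \<in> V2 G \<union> Vp G \<Longrightarrow> succs G x \<subseteq> B"
    and "x \<in> V1 G \<Longrightarrow> succs G x \<inter> B \<noteq> {}"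
proof -
  have "A = PosPre2 G A \<union> T" unfolding A PosAttr2_def using mono_F by (rule lfp_unfold)
  then have nA: "x \<notin> PosPre2 G A" using x B by blast
  show "x \<in> V2 G \<union> Vp G \<Longrightarrow> succs G x \<subseteq> B"
    using nA succs_verts[OF G] unfolding PosPre2_def B by blast
  show "x \<in> V1 G \<Longrightarrow> succs G x \<inter> B \<noteq> {}"
    using nA succs_verts[OF G] unfolding PosPre2_def B by blast
qed

lemma pmf_cond_same: "set_pmf p \<subseteq> s \<Longrightarrow> pmf (cond_pmf p s) x = pmf p x"
proof -
  assume sub: "set_pmf p \<subseteq> s"
  have ne: "set_pmf p \<inter> s \<noteq> {}" using sub set_pmf_not_empty[of p] by blast
  have m1: "measure (measure_pmf p) s = 1"
    by (subst measure_pmf.prob_eq_1) (use sub in \<open>auto simp: AE_measure_pmf_iff\<close>)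
  show ?thesis
  proof (cases "x \<in> s")
    case True then show ?thesis using pmf_cond[OF ne] m1 by simp
  next
    case False
    then have "x \<notin> set_pmf p" using sub by blast
    then show ?thesis using pmf_cond[OF ne] False by (simp add: set_pmf_iff)
  qed
qed

locale trapctx =
  fixes G :: "'v game" and T A B :: "'v set"
  assumes G: "stoch_game G" and A: "A = PosAttr2 G T" and B: "B = verts G - A"
begin

abbreviation "rg \<equiv> restrict_game G B"

lemma Bsub: "B \<subseteq> verts G" using B by blast

lemma fin: "finite (verts G)" and part: "V1 G \<union> V2 G \<union> Vp G = verts G"
  and disj: "V1 G \<inter> V2 G = {}" "V1 G \<inter> Vp G = {}" "V2 G \<inter> Vp G = {}"
  and edges: "edges G \<subseteq> verts G \<times> verts G"
  and nonempty: "\<And>x. x \<in> verts G \<Longrightarrow> succs G x \<noteq> {}"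
  and Vp: "\<And>x. x \<in> Vp G \<Longrightarrow> set_pmf (delta G x) = succs G x"
  using G unfolding stoch_game_def by blast+

lemma trap2: "x \<in> B \<Longrightarrow> x \<in> V2 G \<union> Vp G \<Longrightarrow> succs G x \<subseteq> B"
  using trap(1)[OF G A B] by blast

lemma trap1: "x \<in> B \<Longrightarrow> x \<in> V1 G \<Longrightarrow> succs G x \<inter> B \<noteq> {}"
  using trap(2)[OF G A B] by blast

lemma rg_simps: "verts rg = B" "V1 rg = V1 G \<inter> B" "V2 rg = V2 G \<inter> B" "Vp rg = Vp G \<inter> B"
  "edges rg = edges G \<inter> B \<times> B" "delta rg = (\<lambda>x. cond_pmf (delta G x) B)"
  unfolding restrict_game_def using Bsub by auto

lemma succs_rg: "succs rg x = (if x \<in> B then succs G x \<inter> B else {})"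
  unfolding succs_def rg_simps by auto

lemma pmf_rg: "x \<in> Vp G \<Longrightarrow> x \<in> B \<Longrightarrow> pmf (delta rg x) w = pmf (delta G x) w"
  unfolding rg_simps by (rule pmf_cond_same) (use Vp trap2 in blast)

lemma stoch_rg: "stoch_game rg"
  unfolding stoch_game_def
proof (intro conjI ballI)
  show "finite (verts rg)" using fin Bsub by (simp add: rg_simps finite_subset)
  show "V1 rg \<union> V2 rg \<union> Vp rg = verts rg" using part Bsub by (auto simp: rg_simps)
  show "V1 rg \<inter> V2 rg = {}" "V1 rg \<inter> Vp rg = {}" "V2 rg \<inter> Vp rg = {}" using disj by (auto simp: rg_simps)
  show "edges rg \<subseteq> verts rg \<times> verts rg" by (auto simp: rg_simps)
  fix x assume x: "x \<in> verts rg"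
  then have xB: "x \<in> B" by (simp add: rg_simps)
  then have xv: "x \<in> verts G" using Bsub by blast
  show "succs rg x \<noteq> {}"
  proof (cases "x \<in> V1 G")
    case True then show ?thesis using trap1[OF xB] xB by (simp add: succs_rg)
  next
    case False
    then have "x \<in> V2 G \<union> Vp G" using part xv by blast
    then show ?thesis using trap2[OF xB] nonempty[OF xv] xB by (auto simp: succs_rg)
  qed
next
  fix x assume x: "x \<in> Vp rg"
  then have xB: "x \<in> B" and xp: "x \<in> Vp G" by (auto simp: rg_simps)
  have ne: "set_pmf (delta G x) \<inter> B \<noteq> {}"
    using Vp[OF xp] nonempty[of x] trap2[OF xB] xp part by blast
  have "set_pmf (delta rg x) = set_pmf (delta G x) \<inter> B" unfolding rg_simps using set_cond_pmf[OF ne] .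
  then show "set_pmf (delta rg x) = succs rg x" using Vp[OF xp] xB by (simp add: succs_rg)
qed

end

definition consis :: "'v game \<Rightarrow> 'v \<Rightarrow> ('v list \<Rightarrow> 'v) \<Rightarrow> 'v list \<Rightarrow> bool" where
  "consis G v \<sigma>1 y \<longleftrightarrow> y \<noteq> [] \<and> y ! 0 = v \<and>
     (\<forall>i. Suc i < length y \<longrightarrow> (y ! i, y ! Suc i) \<in> edges G \<and> (y ! i \<in> V1 G \<longrightarrow> y ! Suc i = \<sigma>1 (take (Suc i) y)))"

lemma consis_single: "consis G v \<sigma>1 [v]"
  unfolding consis_def by simp

lemma consis_snoc:
  assumes c: "consis G v \<sigma>1 y" and e: "(last y, w) \<in> edges G" and s: "last y \<in> V1 G \<longrightarrow> w = \<sigma>1 y"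
  shows "consis G v \<sigma>1 (y @ [w])"
proof -
  have ne: "y \<noteq> []" and y0: "y ! 0 = v"
    and old: "\<And>i. Suc i < length y \<Longrightarrow> (y ! i, y ! Suc i) \<in> edges G \<and> (y ! i \<in> V1 G \<longrightarrow> y ! Suc i = \<sigma>1 (take (Suc i) y))"
    using c unfolding consis_def by blast+
  have ly: "last y = y ! (length y - 1)" using ne by (simp add: last_conv_nth)
  show ?thesis unfolding consis_def
  proof (intro conjI allI impI)
    show "y @ [w] \<noteq> []" by simp
    show "(y @ [w]) ! 0 = v" using ne y0 by (simp add: nth_append)
    fix i assume i: "Suc i < length (y @ [w])"
    show "((y @ [w]) ! i, (y @ [w]) ! Suc i) \<in> edges G"
    proof (cases "Suc i < length y")
      case True then show ?thesis using old[of i] by (simp add: nth_append)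
    next
      case False
      then have "i = length y - 1" using i by simp
      then show ?thesis using e ly ne by (simp add: nth_append)
    qed
    assume v1: "(y @ [w]) ! i \<in> V1 G"
    show "(y @ [w]) ! Suc i = \<sigma>1 (take (Suc i) (y @ [w]))"
    proof (cases "Suc i < length y")
      case True then show ?thesis using old[of i] v1 by (simp add: nth_append)
    next
      case False
      then have ii: "i = length y - 1" using i by simp
      then have "take (Suc i) (y @ [w]) = y" using ne by simp
      then show ?thesis using s ly v1 ii ne by (simp add: nth_append)
    qed
  qed
qed

lemma consis_prefix:
  assumes "consis G v \<sigma>1 (y @ z)" "y \<noteq> []"
  shows "consis G v \<sigma>1 y"
proof -
  have c: "(y @ z) \<noteq> []" "(y @ z) ! 0 = v"
    "\<And>i. Suc i < length (y @ z) \<Longrightarrow> ((y @ z) ! i, (y @ z) ! Suc i) \<in> edges G \<and>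
        ((y @ z) ! i \<in> V1 G \<longrightarrow> (y @ z) ! Suc i = \<sigma>1 (take (Suc i) (y @ z)))"
    using assms(1) unfolding consis_def by blast+
  show ?thesis unfolding consis_def
  proof (intro conjI allI impI)
    show "y \<noteq> []" by fact
    show "y ! 0 = v" using c(2) assms(2) by (simp add: nth_append)
    fix i assume i: "Suc i < length y"
    have eqs: "(y @ z) ! i = y ! i" "(y @ z) ! Suc i = y ! Suc i" "take (Suc i) (y @ z) = take (Suc i) y"
      using i by (auto simp: nth_append)
    show "(y ! i, y ! Suc i) \<in> edges G" using c(3)[of i] i eqs by simp
    show "y ! i \<in> V1 G \<Longrightarrow> y ! Suc i = \<sigma>1 (take (Suc i) y)" using c(3)[of i] i eqs by simp
  qed
qed

lemma consis_verts:
  assumes G: "stoch_game G" and v: "v \<in> verts G" and c: "consis G v \<sigma>1 y" and i: "i < length y"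
  shows "y ! i \<in> verts G"
proof (cases i)
  case 0 then show ?thesis using c v unfolding consis_def by simp
next
  case (Suc j)
  then have "(y ! j, y ! i) \<in> edges G" using c i unfolding consis_def by blast
  then show ?thesis using G unfolding stoch_game_def by blast
qed

lemma consis_last_verts:
  assumes G: "stoch_game G" and v: "v \<in> verts G" and c: "consis G v \<sigma>1 y"
  shows "last y \<in> verts G"
proof -
  have "y \<noteq> []" using c unfolding consis_def by blast
  then show ?thesis using consis_verts[OF G v c, of "length y - 1"] by (simp add: last_conv_nth)
qed

lemma attr_reach:
  assumes G: "stoch_game G" and s1: "strategy G (V1 G) \<sigma>1" and x: "x \<in> PosAttr2 G T"
  shows "\<forall>y. consis G v \<sigma>1 y \<and> last y = x \<longrightarrow> (\<exists>z. consis G v \<sigma>1 (y @ z) \<and> last (y @ z) \<in> T)"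
  using x unfolding PosAttr2_def
proof (rule lfp_induct_set[where P="\<lambda>x. \<forall>y. consis G v \<sigma>1 y \<and> last y = x \<longrightarrow> (\<exists>z. consis G v \<sigma>1 (y @ z) \<and> last (y @ z) \<in> T)", OF _ mono_F])
  fix x assume 1: "x \<in> PosPre2 G (lfp (\<lambda>X. PosPre2 G X \<union> T) \<inter> {x. \<forall>y. consis G v \<sigma>1 y \<and> last y = x \<longrightarrow> (\<exists>z. consis G v \<sigma>1 (y @ z) \<and> last (y @ z) \<in> T)}) \<union> T"
  have disj: "V1 G \<inter> V2 G = {}" "V1 G \<inter> Vp G = {}" using G unfolding stoch_game_def by blast+
  show "\<forall>y. consis G v \<sigma>1 y \<and> last y = x \<longrightarrow> (\<exists>z. consis G v \<sigma>1 (y @ z) \<and> last (y @ z) \<in> T)"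
  proof (intro allI impI)
    fix y assume y: "consis G v \<sigma>1 y \<and> last y = x"
    have ne: "y \<noteq> []" using y unfolding consis_def by blast
    consider "x \<in> T" | "x \<in> V2 G \<union> Vp G" "\<exists>w\<in>succs G x. w \<in> lfp (\<lambda>X. PosPre2 G X \<union> T) \<inter>
        {x. \<forall>y. consis G v \<sigma>1 y \<and> last y = x \<longrightarrow> (\<exists>z. consis G v \<sigma>1 (y @ z) \<and> last (y @ z) \<in> T)}"
      | "x \<in> V1 G" "succs G x \<subseteq> lfp (\<lambda>X. PosPre2 G X \<union> T) \<inter>
        {x. \<forall>y. consis G v \<sigma>1 y \<and> last y = x \<longrightarrow> (\<exists>z. consis G v \<sigma>1 (y @ z) \<and> last (y @ z) \<in> T)}"
      using 1 unfolding PosPre2_def by blast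
    then show "\<exists>z. consis G v \<sigma>1 (y @ z) \<and> last (y @ z) \<in> T"
    proof cases
      case 1 then show ?thesis using y by (intro exI[of _ "[]"]) simp
    next
      case 2
      then obtain w where w: "w \<in> succs G x" and IH: "\<forall>y. consis G v \<sigma>1 y \<and> last y = w \<longrightarrow> (\<exists>z. consis G v \<sigma>1 (y @ z) \<and> last (y @ z) \<in> T)"
        by blast
      have "x \<notin> V1 G" using 2 disj by blast
      then have c: "consis G v \<sigma>1 (y @ [w])" using y w by (intro consis_snoc) (auto simp: succs_def)
      then obtain z where "consis G v \<sigma>1 (y @ [w] @ z)" "last (y @ [w] @ z) \<in> T" using IH by fastforce
      then show ?thesis by (intro exI[of _ "w # z"]) simp
    next
      case 3
      have w: "\<sigma>1 y \<in> succs G x" using strategyD[OF s1 ne] 3 y by blast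
      then have IH: "\<forall>y'. consis G v \<sigma>1 y' \<and> last y' = \<sigma>1 y \<longrightarrow> (\<exists>z. consis G v \<sigma>1 (y' @ z) \<and> last (y' @ z) \<in> T)"
        using 3 by blast
      have c: "consis G v \<sigma>1 (y @ [\<sigma>1 y])" using y w by (intro consis_snoc) (auto simp: succs_def)
      then obtain z where "consis G v \<sigma>1 (y @ [\<sigma>1 y] @ z)" "last (y @ [\<sigma>1 y] @ z) \<in> T" using IH by fastforce
      then show ?thesis by (intro exI[of _ "\<sigma>1 y # z"]) simp
    qed
  qed
qed

lemma not_parity:
  assumes le: "\<forall>j. \<Omega> (\<rho> !! j) \<le> d" and inf: "\<exists>\<^sub>\<infinity>j. \<Omega> (\<rho> !! j) = d" and odd: "odd d"
  shows "\<not> parity \<Omega> \<rho>"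
proof
  assume "parity \<Omega> \<rho>"
  then obtain p where p: "even p" "\<exists>\<^sub>\<infinity>j. \<Omega> (\<rho> !! j) = p" "\<forall>\<^sub>\<infinity>j. \<Omega> (\<rho> !! j) \<le> p"
    unfolding parity_def by blast
  from INFM_EX[OF p(2)] obtain j where "\<Omega> (\<rho> !! j) = p" by blast
  then have "p \<le> d" using le by metis
  from INFM_EX[OF frequently_eventually_conj[OF inf p(3)]] obtain j' where "\<Omega> (\<rho> !! j') \<le> p" "\<Omega> (\<rho> !! j') = d"
    by blast
  then have "d \<le> p" by simp
  then show False using \<open>p \<le> d\<close> p(1) odd by simp
qed

lemma INFM_Suc_iff': "(\<exists>\<^sub>\<infinity>n. P (Suc n)) \<longleftrightarrow> (\<exists>\<^sub>\<infinity>n. P n)"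
  unfolding frequently_def using MOST_Suc_iff[of "\<lambda>n. \<not> P n"] by simp

lemma parity_stl: "parity \<Omega> (stl \<rho>) \<longleftrightarrow> parity \<Omega> \<rho>"
proof -
  have e1: "(\<exists>\<^sub>\<infinity>j. \<Omega> (stl \<rho> !! j) = p) \<longleftrightarrow> (\<exists>\<^sub>\<infinity>j. \<Omega> (\<rho> !! j) = p)" for p
    using INFM_Suc_iff'[of "\<lambda>j. \<Omega> (\<rho> !! j) = p"] by simp
  have e2: "(\<forall>\<^sub>\<infinity>j. \<Omega> (stl \<rho> !! j) \<le> p) \<longleftrightarrow> (\<forall>\<^sub>\<infinity>j. \<Omega> (\<rho> !! j) \<le> p)" for p
    using MOST_Suc_iff[of "\<lambda>j. \<Omega> (\<rho> !! j) \<le> p"] by simp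
  show ?thesis unfolding parity_def e1 e2 ..
qed

lemma parity_Stream: "parity \<Omega> (x ## \<rho>) \<longleftrightarrow> parity \<Omega> \<rho>"
  using parity_stl[of \<Omega> "x ## \<rho>"] by simp

lemma parity_shift: "parity \<Omega> (xs @- \<rho>) \<longleftrightarrow> parity \<Omega> \<rho>"
  by (induction xs) (auto simp: parity_Stream)

lemma parity_sdrop: "parity \<Omega> (sdrop k \<rho>) \<longleftrightarrow> parity \<Omega> \<rho>"
  by (induction k arbitrary: \<rho>) (auto simp: parity_stl)

lemma funpow_Suc_0: "(Suc ^^ n) 0 = n"
  by (induction n) auto

lemma good_hist:
  assumes G: "stoch_game G" and s1: "strategy G (V1 G) \<sigma>1" and v: "v \<in> verts G"
    and win: "Out G v \<sigma>1 \<subseteq> {\<rho>. parity \<Omega>1 \<rho>}"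
    and d: "d = Max (\<Omega>1 ` verts G)" and odd: "odd d"
    and A: "A = PosAttr2 G {v \<in> verts G. \<Omega>1 v = d}" and B: "B = verts G - A"
  shows "\<exists>y. consis G v \<sigma>1 y \<and> (\<forall>z. consis G v \<sigma>1 (y @ z) \<longrightarrow> last (y @ z) \<in> B)"
proof (rule ccontr)
  assume "\<not> ?thesis"
  then have nb: "\<And>y. consis G v \<sigma>1 y \<Longrightarrow> \<exists>z. consis G v \<sigma>1 (y @ z) \<and> last (y @ z) \<notin> B" by blast
  have fin: "finite (verts G)" and edges: "edges G \<subseteq> verts G \<times> verts G"
    and nonempty: "\<And>x. x \<in> verts G \<Longrightarrow> succs G x \<noteq> {}" using G unfolding stoch_game_def by blast+
  have step: "\<exists>z. z \<noteq> [] \<and> consis G v \<sigma>1 (y @ z) \<and> \<Omega>1 (last (y @ z)) = d" if c: "consis G v \<sigma>1 y" for y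
  proof -
    have ne: "y \<noteq> []" using c unfolding consis_def by blast
    have lv: "last y \<in> verts G" by (rule consis_last_verts[OF G v c])
    define w where "w = (if last y \<in> V1 G then \<sigma>1 y else (SOME w. w \<in> succs G (last y)))"
    have w: "w \<in> succs G (last y)"
    proof (cases "last y \<in> V1 G")
      case True then show ?thesis using strategyD[OF s1 ne] unfolding w_def by simp
    next
      case False then show ?thesis using nonempty[OF lv] unfolding w_def by (simp add: some_in_eq)
    qed
    have c1: "consis G v \<sigma>1 (y @ [w])" using c w unfolding w_def by (intro consis_snoc) (auto simp: succs_def)
    obtain z1 where z1: "consis G v \<sigma>1 (y @ [w] @ z1)" "last (y @ [w] @ z1) \<notin> B"
      using nb[OF c1] by auto
    have "last (y @ [w] @ z1) \<in> verts G" using consis_last_verts[OF G v z1(1)] .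
    then have "last (y @ [w] @ z1) \<in> A" using z1(2) B by blast
    then obtain z2 where z2: "consis G v \<sigma>1 ((y @ [w] @ z1) @ z2)" "last ((y @ [w] @ z1) @ z2) \<in> {v \<in> verts G. \<Omega>1 v = d}"
      using attr_reach[OF G s1, of "last (y @ [w] @ z1)" "{v \<in> verts G. \<Omega>1 v = d}" v] A z1(1) by blast
    show ?thesis using z2 by (intro exI[of _ "w # z1 @ z2"]) simp
  qed
  define nxt where "nxt y = (SOME z. z \<noteq> [] \<and> consis G v \<sigma>1 (y @ z) \<and> \<Omega>1 (last (y @ z)) = d)" for y
  define H where "H = rec_nat [v] (\<lambda>_ y. y @ nxt y)"
  have nxtP: "nxt y \<noteq> [] \<and> consis G v \<sigma>1 (y @ nxt y) \<and> \<Omega>1 (last (y @ nxt y)) = d"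
    if "consis G v \<sigma>1 y" for y
    unfolding nxt_def by (rule someI_ex[OF step[OF that]])
  have H0: "H 0 = [v]" and HS: "\<And>n. H (Suc n) = H n @ nxt (H n)" unfolding H_def by simp_all
  have Hp: "consis G v \<sigma>1 (H n) \<and> length (H n) \<ge> Suc n" for n
  proof (induction n)
    case 0 then show ?case using H0 consis_single by simp
  next
    case (Suc n)
    have "nxt (H n) \<noteq> [] \<and> consis G v \<sigma>1 (H n @ nxt (H n)) \<and> \<Omega>1 (last (H n @ nxt (H n))) = d"
      using nxtP Suc.IH by blast
    then have "consis G v \<sigma>1 (H (Suc n))" "length (H (Suc n)) \<ge> Suc (length (H n))"
      using HS[of n] by (auto simp: Suc_le_eq)
    then show ?case using Suc.IH by simp
  qed
  have Hd: "\<Omega>1 (last (H (Suc n))) = d" for n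
  proof -
    have "nxt (H n) \<noteq> [] \<and> consis G v \<sigma>1 (H n @ nxt (H n)) \<and> \<Omega>1 (last (H n @ nxt (H n))) = d"
      using nxtP Hp by blast
    then show ?thesis unfolding HS[of n] by blast
  qed
  have pre: "m \<le> n \<Longrightarrow> \<exists>z. H n = H m @ z" for m n
  proof (induction n)
    case 0 then show ?case by simp
  next
    case (Suc n)
    show ?case
    proof (cases "m = Suc n")
      case True then show ?thesis by simp
    next
      case False
      then obtain z where "H n = H m @ z" using Suc by auto
      then show ?thesis using HS by auto
    qed
  qed
  have coh: "i < length (H m) \<Longrightarrow> i < length (H n) \<Longrightarrow> H m ! i = H n ! i" for i m n
  proof -
    assume i: "i < length (H m)" "i < length (H n)"
    obtain z1 where z1: "H (max m n) = H m @ z1" using pre[of m "max m n"] by auto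
    obtain z2 where z2: "H (max m n) = H n @ z2" using pre[of n "max m n"] by auto
    have "H (max m n) ! i = H m ! i" using z1 i by (simp add: nth_append)
    moreover have "H (max m n) ! i = H n ! i" using z2 i by (simp add: nth_append)
    ultimately show ?thesis by simp
  qed
  define \<rho> where "\<rho> = smap (\<lambda>i. H (Suc i) ! i) nats"
  have rho: "i < length (H n) \<Longrightarrow> \<rho> !! i = H n ! i" for i n
  proof -
    assume i: "i < length (H n)"
    have "i < length (H (Suc i))" using Hp[of "Suc i"] by simp
    then show ?thesis unfolding \<rho>_def using coh[OF _ i] by (simp add: funpow_Suc_0)
  qed
  have stake_rho: "Suc i < length (H n) \<Longrightarrow> take (Suc i) (H n) = stake (Suc i) \<rho>" for i n
  proof (rule nth_equalityI)
    assume l: "Suc i < length (H n)"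
    show "length (take (Suc i) (H n)) = length (stake (Suc i) \<rho>)" using l by simp
    fix k assume "k < length (take (Suc i) (H n))"
    then have k: "k < Suc i" "k < length (H n)" using l by auto
    show "take (Suc i) (H n) ! k = stake (Suc i) \<rho> ! k"
      using k rho[OF k(2)] by (simp del: stake.simps)
  qed
  have out: "\<rho> \<in> Out G v \<sigma>1"
    unfolding Out_def
  proof (intro CollectI conjI allI impI)
    show "\<rho> !! 0 = v" using rho[of 0 0] H0 by simp
    fix i
    have l: "Suc i < length (H (Suc (Suc i)))" using Hp[of "Suc (Suc i)"] by simp
    have c: "consis G v \<sigma>1 (H (Suc (Suc i)))" using Hp by blast
    have e: "(H (Suc (Suc i)) ! i, H (Suc (Suc i)) ! Suc i) \<in> edges G"
      and sv: "H (Suc (Suc i)) ! i \<in> V1 G \<Longrightarrow> H (Suc (Suc i)) ! Suc i = \<sigma>1 (take (Suc i) (H (Suc (Suc i))))"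
      using c l unfolding consis_def by blast+
    have r1: "\<rho> !! i = H (Suc (Suc i)) ! i" using rho[of i] l by simp
    have r2: "\<rho> !! Suc i = H (Suc (Suc i)) ! Suc i" using rho[OF l] .
    show "(\<rho> !! i, \<rho> !! Suc i) \<in> edges G" unfolding r1 r2 by (rule e)
    assume "\<rho> !! i \<in> V1 G"
    then show "\<rho> !! Suc i = \<sigma>1 (stake (Suc i) \<rho>)" unfolding r1 r2 stake_rho[OF l, symmetric] by (rule sv)
  qed
  have inv: "\<rho> !! j \<in> verts G" for j
  proof -
    have "(\<rho> !! j, \<rho> !! Suc j) \<in> edges G" using out unfolding Out_def by blast
    then show ?thesis using edges by blast
  qed
  have le: "\<forall>j. \<Omega>1 (\<rho> !! j) \<le> d" unfolding d using fin inv by auto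
  have inf: "\<exists>\<^sub>\<infinity>j. \<Omega>1 (\<rho> !! j) = d"
    unfolding INFM_nat
  proof
    fix m
    let ?j = "length (H (Suc m)) - 1"
    have l: "length (H (Suc m)) \<ge> Suc (Suc m)" using Hp by blast
    then have ne: "H (Suc m) \<noteq> []" by auto
    have "\<rho> !! ?j = H (Suc m) ! ?j" using rho[of ?j "Suc m"] l by simp
    also have "\<dots> = last (H (Suc m))" using last_conv_nth[OF ne] by simp
    finally have "\<rho> !! ?j = last (H (Suc m))" .
    then show "\<exists>j>m. \<Omega>1 (\<rho> !! j) = d" using l Hd by (intro exI[of _ ?j]) simp
  qed
  show False using not_parity[OF le inf odd] out win by blast
qed

lemma hist_append:
  assumes "y \<noteq> []"
  shows "hist_prob G v \<sigma>1 \<sigma>2 (y @ x) = hist_prob G v \<sigma>1 \<sigma>2 y * (\<Prod>i<length x. trans_prob G \<sigma>1 \<sigma>2 (y @ take i x) (x ! i))"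
proof (induction x rule: rev_induct)
  case Nil then show ?case by simp
next
  case (snoc w x)
  have "hist_prob G v \<sigma>1 \<sigma>2 (y @ x @ [w]) = hist_prob G v \<sigma>1 \<sigma>2 ((y @ x) @ [w])" by simp
  also have "\<dots> = hist_prob G v \<sigma>1 \<sigma>2 (y @ x) * trans_prob G \<sigma>1 \<sigma>2 (y @ x) w"
    using assms by (intro hist_snoc) simp
  also have "\<dots> = hist_prob G v \<sigma>1 \<sigma>2 y * ((\<Prod>i<length x. trans_prob G \<sigma>1 \<sigma>2 (y @ take i x) (x ! i)) * trans_prob G \<sigma>1 \<sigma>2 (y @ x) w)"
    using snoc by simp
  also have "(\<Prod>i<length x. trans_prob G \<sigma>1 \<sigma>2 (y @ take i x) (x ! i)) = (\<Prod>i<length x. trans_prob G \<sigma>1 \<sigma>2 (y @ take i (x @ [w])) ((x @ [w]) ! i))"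
    by (rule prod.cong) (auto simp: nth_append)
  also have "\<dots> * trans_prob G \<sigma>1 \<sigma>2 (y @ x) w = (\<Prod>i<length (x @ [w]). trans_prob G \<sigma>1 \<sigma>2 (y @ take i (x @ [w])) ((x @ [w]) ! i))"
    by simp
  finally show ?case .
qed

lemma last_stake_Suc: "last (stake (Suc i) \<rho>) = \<rho> !! i"
  by (simp only: stake_Suc last_snoc)

context trapctx
begin

lemma trans_eq:
  assumes hB: "last h \<in> B" and hh: "last h' = last h" and ne: "h \<noteq> []"
    and s1: "last h \<in> V1 G \<Longrightarrow> \<sigma>a h = \<sigma>b h'" and s2: "last h \<in> V2 G \<Longrightarrow> \<sigma>2a h = \<sigma>2b h'"
  shows "trans_prob rg \<sigma>a \<sigma>2a h w = trans_prob G \<sigma>b \<sigma>2b h' w"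
  using hB hh s1 s2 pmf_rg[of "last h" w] unfolding trans_prob_def rg_simps by auto

lemma easy:
  assumes u: "u \<in> sas_region rg \<Omega>1 \<Omega>2"
  shows "u \<in> sas_region G \<Omega>1 \<Omega>2"
proof -
  obtain \<sigma>1 where uB: "u \<in> B" and s1: "strategy rg (V1 rg) \<sigma>1" and out: "Out rg u \<sigma>1 \<subseteq> {\<rho>. parity \<Omega>1 \<rho>}"
    and pr: "\<And>\<sigma>2. strategy rg (V2 rg) \<sigma>2 \<Longrightarrow> measure (Pr rg u \<sigma>1 \<sigma>2) {\<rho>. parity \<Omega>2 \<rho>} = 1"
    using u unfolding sas_region_def rg_simps by blast
  define \<sigma>G where "\<sigma>G h = (if last h \<in> B then \<sigma>1 h else (SOME w. w \<in> succs G (last h)))" for h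
  have \<sigma>GB: "\<sigma>G h = \<sigma>1 h" if "last h \<in> B" for h using that unfolding \<sigma>G_def by simp
  have sG: "strategy G (V1 G) \<sigma>G"
    unfolding strategy_def
  proof (intro allI impI)
    fix h assume h: "h \<noteq> [] \<and> last h \<in> V1 G"
    show "\<sigma>G h \<in> succs G (last h)"
    proof (cases "last h \<in> B")
      case True
      then have "\<sigma>1 h \<in> succs rg (last h)" using strategyD[OF s1] h by (simp add: rg_simps)
      then show ?thesis using True unfolding \<sigma>G_def by (simp add: succs_rg)
    next
      case False
      have "last h \<in> verts G" using h part by blast
      then show ?thesis using False nonempty unfolding \<sigma>G_def by (simp add: some_in_eq)
    qed
  qed
  have uv: "u \<in> verts G" using uB Bsub by blast
  have outG: "Out G u \<sigma>G \<subseteq> {\<rho>. parity \<Omega>1 \<rho>}"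
  proof
    fix \<rho> assume \<rho>: "\<rho> \<in> Out G u \<sigma>G"
    have r0: "\<rho> !! 0 = u" and re: "\<And>i. (\<rho> !! i, \<rho> !! Suc i) \<in> edges G"
      and rs: "\<And>i. \<rho> !! i \<in> V1 G \<Longrightarrow> \<rho> !! Suc i = \<sigma>G (stake (Suc i) \<rho>)"
      using \<rho> unfolding Out_def by blast+
    have inB: "\<rho> !! i \<in> B" for i
    proof (induction i)
      case 0 then show ?case using r0 uB by simp
    next
      case (Suc i)
      show ?case
      proof (cases "\<rho> !! i \<in> V1 G")
        case True
        then have "\<rho> !! Suc i = \<sigma>G (stake (Suc i) \<rho>)" by (rule rs)
        also have "\<dots> = \<sigma>1 (stake (Suc i) \<rho>)" by (rule \<sigma>GB) (simp only: last_stake_Suc Suc)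
        finally have "\<rho> !! Suc i = \<sigma>1 (stake (Suc i) \<rho>)" .
        moreover have "\<sigma>1 (stake (Suc i) \<rho>) \<in> succs rg (\<rho> !! i)"
        proof -
          have "stake (Suc i) \<rho> \<noteq> []" by (simp del: stake.simps)
          moreover have "last (stake (Suc i) \<rho>) \<in> V1 rg" using True Suc unfolding last_stake_Suc rg_simps by blast
          ultimately have "\<sigma>1 (stake (Suc i) \<rho>) \<in> succs rg (last (stake (Suc i) \<rho>))" by (rule strategyD[OF s1])
          then show ?thesis by (simp only: last_stake_Suc)
        qed
        ultimately show ?thesis using Suc by (simp add: succs_rg)
      next
        case False
        have "\<rho> !! i \<in> verts G" using Suc Bsub by blast
        then have "\<rho> !! i \<in> V2 G \<union> Vp G" using False part by blast
        then show ?thesis using trap2[OF Suc] re[of i] unfolding succs_def by blast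
      qed
    qed
    have "\<rho> \<in> Out rg u \<sigma>1"
      unfolding Out_def rg_simps
    proof (intro CollectI conjI allI impI)
      show "\<rho> !! 0 = u" by fact
      fix i
      show "(\<rho> !! i, \<rho> !! Suc i) \<in> edges G \<inter> B \<times> B" using re inB by blast
      assume "\<rho> !! i \<in> V1 G \<inter> B"
      then have "\<rho> !! Suc i = \<sigma>G (stake (Suc i) \<rho>)" using rs by blast
      also have "\<dots> = \<sigma>1 (stake (Suc i) \<rho>)" by (rule \<sigma>GB) (simp only: last_stake_Suc inB)
      finally show "\<rho> !! Suc i = \<sigma>1 (stake (Suc i) \<rho>)" .
    qed
    then show "\<rho> \<in> {\<rho>. parity \<Omega>1 \<rho>}" using out by blast
  qed
  have prG: "measure (Pr G u \<sigma>G \<sigma>2) {\<rho>. parity \<Omega>2 \<rho>} = 1" if s2: "strategy G (V2 G) \<sigma>2" for \<sigma>2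
  proof -
    have s2': "strategy rg (V2 rg) \<sigma>2"
      unfolding strategy_def
    proof (intro allI impI)
      fix h assume h: "h \<noteq> [] \<and> last h \<in> V2 rg"
      then have "last h \<in> B" "last h \<in> V2 G" by (auto simp: rg_simps)
      then show "\<sigma>2 h \<in> succs rg (last h)" using strategyD[OF s2] h trap2 by (auto simp: succs_rg)
    qed
    have heq: "hist_prob G u \<sigma>G \<sigma>2 x = hist_prob rg u \<sigma>1 \<sigma>2 x" for x
    proof -
      have "(\<Prod>i<length x - 1. trans_prob rg \<sigma>1 \<sigma>2 (take (Suc i) x) (x ! Suc i)) =
            (\<Prod>i<length x - 1. trans_prob G \<sigma>G \<sigma>2 (take (Suc i) x) (x ! Suc i))"
        if x0: "x ! 0 = u"
      proof (rule prod_first_zero)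
        fix i assume i: "i < length x - 1" and nz: "\<forall>j<i. trans_prob rg \<sigma>1 \<sigma>2 (take (Suc j) x) (x ! Suc j) \<noteq> 0"
        have xne: "x \<noteq> []" using i by auto
        have xiB: "x ! i \<in> B"
        proof (cases i)
          case 0 then show ?thesis using x0 uB by simp
        next
          case (Suc j)
          then have "trans_prob rg \<sigma>1 \<sigma>2 (take (Suc j) x) (x ! Suc j) \<noteq> 0" using nz by simp
          then have "x ! Suc j \<in> succs rg (last (take (Suc j) x))" using trans_nz[OF stoch_rg s1 s2'] xne by simp
          then show ?thesis using Suc by (simp add: succs_rg split: if_splits)
        qed
        have l: "last (take (Suc i) x) = x ! i" using i by (intro last_take_Suc) simp
        show "trans_prob rg \<sigma>1 \<sigma>2 (take (Suc i) x) (x ! Suc i) = trans_prob G \<sigma>G \<sigma>2 (take (Suc i) x) (x ! Suc i)"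
          by (rule trans_eq) (use l xiB xne in \<open>auto simp: \<sigma>G_def\<close>)
      qed
      then show ?thesis unfolding hist_prob_def by simp
    qed
    have "Pr G u \<sigma>G \<sigma>2 = Pr rg u \<sigma>1 \<sigma>2" unfolding Pr_def heq ..
    then show ?thesis using pr[OF s2'] by simp
  qed
  show ?thesis unfolding sas_region_def using uv sG outG prG by blast
qed

end

lemma consis_Out:
  assumes c: "\<And>n. consis G v \<sigma>1 (stake (Suc n) \<rho>)"
  shows "\<rho> \<in> Out G v \<sigma>1"
  unfolding Out_def
proof (intro CollectI conjI allI impI)
  show "\<rho> !! 0 = v" using c[of 0] unfolding consis_def by simp
  fix i
  have ci: "consis G v \<sigma>1 (stake (Suc (Suc i)) \<rho>)" by (rule c)
  have l: "Suc i < length (stake (Suc (Suc i)) \<rho>)" by simp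
  have e: "(stake (Suc (Suc i)) \<rho> ! i, stake (Suc (Suc i)) \<rho> ! Suc i) \<in> edges G"
    and s: "stake (Suc (Suc i)) \<rho> ! i \<in> V1 G \<Longrightarrow> stake (Suc (Suc i)) \<rho> ! Suc i = \<sigma>1 (take (Suc i) (stake (Suc (Suc i)) \<rho>))"
    using ci l unfolding consis_def by blast+
  have n1: "stake (Suc (Suc i)) \<rho> ! i = \<rho> !! i" by (rule stake_nth) simp
  have n2: "stake (Suc (Suc i)) \<rho> ! Suc i = \<rho> !! Suc i" by (rule stake_nth) simp
  have t: "take (Suc i) (stake (Suc (Suc i)) \<rho>) = stake (Suc i) \<rho>" by (simp add: take_stake min_def del: stake.simps)
  show "(\<rho> !! i, \<rho> !! Suc i) \<in> edges G" using e unfolding n1 n2 .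
  assume "\<rho> !! i \<in> V1 G"
  then show "\<rho> !! Suc i = \<sigma>1 (stake (Suc i) \<rho>)" using s unfolding n1 n2 t by blast
qed

lemma sstart_append: "\<rho> \<in> sstart UNIV (xs @ ys) \<longleftrightarrow> \<rho> \<in> sstart UNIV xs \<and> sdrop (length xs) \<rho> \<in> sstart UNIV ys"
  by (induction xs arbitrary: \<rho>) auto

context trapctx
begin

lemma hard:
  assumes d: "d = Max (\<Omega>1 ` verts G)" and odd: "odd d" and T: "T = {v \<in> verts G. \<Omega>1 v = d}"
    and vw: "v \<in> sas_region G \<Omega>1 \<Omega>2"
  shows "\<exists>u. u \<in> sas_region rg \<Omega>1 \<Omega>2"
proof -
  let ?P = "{\<rho>. parity \<Omega>2 \<rho>}"
  obtain \<sigma>1 where v: "v \<in> verts G" and s1: "strategy G (V1 G) \<sigma>1" and out: "Out G v \<sigma>1 \<subseteq> {\<rho>. parity \<Omega>1 \<rho>}"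
    and pr: "\<And>\<sigma>2. strategy G (V2 G) \<sigma>2 \<Longrightarrow> measure (Pr G v \<sigma>1 \<sigma>2) ?P = 1"
    using vw unfolding sas_region_def by blast
  obtain y where cy: "consis G v \<sigma>1 y" and good: "\<And>z. consis G v \<sigma>1 (y @ z) \<Longrightarrow> last (y @ z) \<in> B"
    using good_hist[OF G s1 v out d odd A[unfolded T] B] by blast
  have yne: "y \<noteq> []" using cy unfolding consis_def by blast
  define u where "u = last y"
  define hb where "hb = butlast y"
  define k where "k = length hb"
  have y_eq: "y = hb @ [u]" unfolding u_def hb_def using yne by simp
  have ly: "length y = Suc k" unfolding k_def y_eq by simp
  have uB: "u \<in> B" using good[of "[]"] cy unfolding u_def by simp
  have lastyw: "last (y @ w) = last (u # w)" for w unfolding y_eq by simp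
  have yw: "y @ w = hb @ (u # w)" for w unfolding y_eq by simp
  define \<sigma>1' where "\<sigma>1' x = (if \<sigma>1 (hb @ x) \<in> succs G (last x) \<inter> B then \<sigma>1 (hb @ x) else (SOME w. w \<in> succs G (last x) \<inter> B))" for x
  have s1': "strategy rg (V1 rg) \<sigma>1'"
    unfolding strategy_def
  proof (intro allI impI)
    fix x assume x: "x \<noteq> [] \<and> last x \<in> V1 rg"
    then have xB: "last x \<in> B" and x1: "last x \<in> V1 G" by (auto simp: rg_simps)
    have ex: "\<exists>w. w \<in> succs G (last x) \<inter> B" using trap1[OF xB x1] by blast
    have sm: "(SOME w. w \<in> succs G (last x) \<inter> B) \<in> succs G (last x) \<inter> B" using someI_ex[OF ex] .
    have "\<sigma>1' x \<in> succs G (last x) \<inter> B"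
      unfolding \<sigma>1'_def by (subst if_split) (use sm in blast)
    then show "\<sigma>1' x \<in> succs rg (last x)" using xB by (simp add: succs_rg)
  qed
  have KL: "\<sigma>1' (u # x') = \<sigma>1 (y @ x')" if c: "consis G v \<sigma>1 (y @ x')" and l1: "last (u # x') \<in> V1 G" for x'
  proof -
    have ne: "y @ x' \<noteq> []" using yne by simp
    have l1': "last (y @ x') \<in> V1 G" using l1 lastyw by simp
    have w: "\<sigma>1 (y @ x') \<in> succs G (last (y @ x'))" by (rule strategyD[OF s1 ne l1'])
    have "consis G v \<sigma>1 ((y @ x') @ [\<sigma>1 (y @ x')])"
      using c w l1' by (intro consis_snoc) (auto simp: succs_def)
    then have "last (y @ (x' @ [\<sigma>1 (y @ x')])) \<in> B" using good[of "x' @ [\<sigma>1 (y @ x')]"] by simp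
    then have "\<sigma>1 (y @ x') \<in> succs G (last (u # x')) \<inter> B" using w lastyw by simp
    then show ?thesis unfolding \<sigma>1'_def using yw by simp
  qed
  have outB: "Out rg u \<sigma>1' \<subseteq> {\<rho>. parity \<Omega>1 \<rho>}"
  proof
    fix \<rho>' assume \<rho>': "\<rho>' \<in> Out rg u \<sigma>1'"
    have r0: "\<rho>' !! 0 = u" and re: "\<And>i. (\<rho>' !! i, \<rho>' !! Suc i) \<in> edges G \<inter> B \<times> B"
      and rs: "\<And>i. \<rho>' !! i \<in> V1 G \<inter> B \<Longrightarrow> \<rho>' !! Suc i = \<sigma>1' (stake (Suc i) \<rho>')"
      using \<rho>' unfolding Out_def rg_simps by blast+
    define \<rho>s where "\<rho>s = stl \<rho>'"
    have st: "stake (Suc j) \<rho>' = u # stake j \<rho>s" for j unfolding \<rho>s_def using r0 by simp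
    have lst: "last (u # stake j \<rho>s) = \<rho>' !! j" for j using last_stake_Suc[of j \<rho>'] unfolding st[of j] .
    have cj: "consis G v \<sigma>1 (y @ stake j \<rho>s)" for j
    proof (induction j)
      case 0 then show ?case using cy by simp
    next
      case (Suc j)
      have eq: "y @ stake (Suc j) \<rho>s = (y @ stake j \<rho>s) @ [\<rho>s !! j]" by (simp only: stake_Suc append_assoc)
      have l: "last (y @ stake j \<rho>s) = \<rho>' !! j" using lastyw lst by simp
      have e: "(\<rho>' !! j, \<rho>s !! j) \<in> edges G" using re[of j] unfolding \<rho>s_def by simp
      have sv: "\<rho>s !! j = \<sigma>1 (y @ stake j \<rho>s)" if "\<rho>' !! j \<in> V1 G"
      proof -
        have "\<rho>' !! j \<in> B" using re[of j] by blast
        then have "\<rho>' !! Suc j = \<sigma>1' (stake (Suc j) \<rho>')" using rs that by blast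
        also have "\<dots> = \<sigma>1' (u # stake j \<rho>s)" using st by simp
        also have "\<dots> = \<sigma>1 (y @ stake j \<rho>s)" using KL[OF Suc.IH] lst that by simp
        finally show ?thesis unfolding \<rho>s_def by simp
      qed
      show ?case unfolding eq using Suc.IH e sv l by (intro consis_snoc) auto
    qed
    have "y @- \<rho>s \<in> Out G v \<sigma>1"
    proof (rule consis_Out)
      fix n
      have "stake (length y + Suc n) (y @- \<rho>s) = y @ stake (Suc n) \<rho>s" by (simp add: stake_shift)
      moreover have "stake (Suc n + length y) (y @- \<rho>s) = stake (Suc n) (y @- \<rho>s) @ stake (length y) (sdrop (Suc n) (y @- \<rho>s))"
        by (rule stake_add[symmetric])
      ultimately have "consis G v \<sigma>1 (stake (Suc n) (y @- \<rho>s) @ stake (length y) (sdrop (Suc n) (y @- \<rho>s)))"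
        using cj[of "Suc n"] by (simp add: add.commute)
      then show "consis G v \<sigma>1 (stake (Suc n) (y @- \<rho>s))" by (rule consis_prefix) (simp del: stake.simps)
    qed
    then have "parity \<Omega>1 (y @- \<rho>s)" using out by blast
    then have "parity \<Omega>1 \<rho>s" by (simp add: parity_shift)
    then show "\<rho>' \<in> {\<rho>. parity \<Omega>1 \<rho>}" unfolding \<rho>s_def by (simp add: parity_stl)
  qed
  have prB: "measure (Pr rg u \<sigma>1' \<sigma>2') ?P = 1" if s2': "strategy rg (V2 rg) \<sigma>2'" for \<sigma>2'
  proof -
    define \<sigma>2 where "\<sigma>2 z = (if (\<exists>x. z = hb @ x \<and> x \<noteq> [] \<and> x ! 0 = u) \<and> \<sigma>2' (drop k z) \<in> succs G (last z) then \<sigma>2' (drop k z)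
       else if (\<exists>j<k. z = take (Suc j) y) then y ! length z else (SOME w. w \<in> succs G (last z)))" for z
    have \<sigma>2_pre: "\<sigma>2 (take (Suc j) y) = y ! Suc j" if j: "j < k" for j
    proof -
      have "\<not> (\<exists>x. take (Suc j) y = hb @ x \<and> x \<noteq> [] \<and> x ! 0 = u)"
      proof
        assume "\<exists>x. take (Suc j) y = hb @ x \<and> x \<noteq> [] \<and> x ! 0 = u"
        then obtain x where "take (Suc j) y = hb @ x" "x \<noteq> []" by blast
        then have "length (take (Suc j) y) \<ge> Suc k" unfolding k_def by (cases x) auto
        then show False using j ly by simp
      qed
      moreover have "length (take (Suc j) y) = Suc j" using j ly by simp
      ultimately show ?thesis unfolding \<sigma>2_def using j by auto
    qed
    have \<sigma>2_hb: "\<sigma>2 (hb @ X) = \<sigma>2' X" if X: "X \<noteq> []" "X ! 0 = u" "last X \<in> V2 G" "last X \<in> B" for X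
    proof -
      have "\<sigma>2' X \<in> succs rg (last X)" using strategyD[OF s2'] X by (simp add: rg_simps)
      then have "\<sigma>2' X \<in> succs G (last (hb @ X))" using X by (simp add: succs_rg split: if_splits)
      moreover have "drop k (hb @ X) = X" unfolding k_def by simp
      ultimately show ?thesis unfolding \<sigma>2_def using X by auto
    qed
    have s2: "strategy G (V2 G) \<sigma>2"
      unfolding strategy_def
    proof (intro allI impI)
      fix z assume z: "z \<noteq> [] \<and> last z \<in> V2 G"
      show "\<sigma>2 z \<in> succs G (last z)"
      proof (cases "(\<exists>x. z = hb @ x \<and> x \<noteq> [] \<and> x ! 0 = u) \<and> \<sigma>2' (drop k z) \<in> succs G (last z)")
        case True then show ?thesis unfolding \<sigma>2_def by simp
      next
        case False
        show ?thesis
        proof (cases "\<exists>j<k. z = take (Suc j) y")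
          case True
          then obtain j where j: "j < k" "z = take (Suc j) y" by blast
          have "Suc j < length y" using j ly by simp
          then have "(y ! j, y ! Suc j) \<in> edges G" using cy unfolding consis_def by blast
          moreover have "last z = y ! j" using j ly last_take_Suc[of j y] by simp
          ultimately show ?thesis using \<sigma>2_pre[OF j(1)] j(2) by (simp add: succs_def)
        next
          case False2: False
          have "last z \<in> verts G" using z part by blast
          have "\<sigma>2 z = (SOME w. w \<in> succs G (last z))"
            unfolding \<sigma>2_def by (rule trans[OF if_not_P[OF False] if_not_P[OF False2]])
          then show ?thesis using \<open>last z \<in> verts G\<close> nonempty by (simp add: some_in_eq)
        qed
      qed
    qed
    define M where "M = Pr G v \<sigma>1 \<sigma>2"
    have specM: "pspec G v \<sigma>1 \<sigma>2 M" unfolding M_def by (rule Pr_spec[OF G s1 s2 v])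
    interpret M: prob_space M using specM unfolding pspec_def by blast
    have setsM: "sets M = sets (stream_space (count_space UNIV))" using specM unfolding pspec_def by blast
    have cylM: "\<And>h. h \<noteq> [] \<Longrightarrow> emeasure M (sstart UNIV h) = ennreal (hist_prob G v \<sigma>1 \<sigma>2 h)"
      using specM unfolding pspec_def by blast
    have spaceM: "space M = UNIV" using sets_eq_imp_space_eq[OF setsM] by (simp add: space_stream_space)
    have prM: "measure M ?P = 1" unfolding M_def by (rule pr[OF s2])
    define p where "p = hist_prob G v \<sigma>1 \<sigma>2 y"
    have ppos: "p > 0"
    proof -
      have y0: "y ! 0 = v" using cy unfolding consis_def by blast
      have "(\<Prod>i<length y - 1. trans_prob G \<sigma>1 \<sigma>2 (take (Suc i) y) (y ! Suc i)) > 0"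
      proof (rule prod_pos)
        fix i assume "i \<in> {..<length y - 1}"
        then have i: "i < k" using ly by simp
        have si: "Suc i < length y" using i ly by simp
        have l: "last (take (Suc i) y) = y ! i" using si by (intro last_take_Suc) simp
        have cv: "y ! i \<in> verts G" using consis_verts[OF G v cy, of i] si by simp
        have e: "(y ! i, y ! Suc i) \<in> edges G" and s: "y ! i \<in> V1 G \<Longrightarrow> y ! Suc i = \<sigma>1 (take (Suc i) y)"
          using cy si unfolding consis_def by blast+
        consider "y ! i \<in> V1 G" | "y ! i \<notin> V1 G" "y ! i \<in> V2 G" | "y ! i \<notin> V1 G" "y ! i \<notin> V2 G" "y ! i \<in> Vp G"
          using cv part by blast
        then show "trans_prob G \<sigma>1 \<sigma>2 (take (Suc i) y) (y ! Suc i) > 0"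
        proof cases
          case 1 then show ?thesis using s l unfolding trans_prob_def by simp
        next
          case 2 then show ?thesis using \<sigma>2_pre[OF i] l unfolding trans_prob_def by simp
        next
          case 3
          have "y ! Suc i \<in> set_pmf (delta G (y ! i))" using Vp[OF 3(3)] e by (simp add: succs_def)
          then show ?thesis using 3 l pmf_positive unfolding trans_prob_def by simp
        qed
      qed
      then show ?thesis unfolding p_def hist_prob_def using y0 by simp
    qed
    have KC: "hist_prob G v \<sigma>1 \<sigma>2 (y @ x') = p * hist_prob rg u \<sigma>1' \<sigma>2' (u # x')" for x'
    proof -
      let ?a = "\<lambda>i. trans_prob rg \<sigma>1' \<sigma>2' (u # take i x') (x' ! i)"
      let ?b = "\<lambda>i. trans_prob G \<sigma>1 \<sigma>2 (y @ take i x') (x' ! i)"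
      have cons: "i \<le> length x' \<Longrightarrow> (\<forall>j<i. ?a j \<noteq> 0) \<Longrightarrow> consis G v \<sigma>1 (y @ take i x')" for i
      proof (induction i)
        case 0 then show ?case using cy by simp
      next
        case (Suc i)
        have i: "i < length x'" using Suc.prems by simp
        have IH: "consis G v \<sigma>1 (y @ take i x')" using Suc.IH Suc.prems by simp
        have ai: "?a i \<noteq> 0" using Suc.prems by simp
        have lX: "last (u # take i x') = last (y @ take i x')" using lastyw by simp
        have cB: "last (y @ take i x') \<in> B" using good IH by blast
        have "x' ! i \<in> succs rg (last (u # take i x'))"
          using trans_nz[OF stoch_rg s1' s2' _ ai] by simp
        then have e: "(last (y @ take i x'), x' ! i) \<in> edges G" using lX cB by (simp add: succs_rg succs_def rg_simps)
        have sv: "x' ! i = \<sigma>1 (y @ take i x')" if v1: "last (y @ take i x') \<in> V1 G"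
        proof -
          have "last (u # take i x') \<in> V1 rg" using v1 cB lX by (simp add: rg_simps)
          then have "\<sigma>1' (u # take i x') = x' ! i" using ai unfolding trans_prob_def by (auto split: if_splits)
          moreover have "\<sigma>1' (u # take i x') = \<sigma>1 (y @ take i x')" using KL[OF IH] v1 lX by simp
          ultimately show ?thesis by simp
        qed
        have "consis G v \<sigma>1 ((y @ take i x') @ [x' ! i])" using IH e sv by (intro consis_snoc) auto
        then show ?case using i by (simp add: take_Suc_conv_app_nth)
      qed
      have "(\<Prod>i<length x'. ?a i) = (\<Prod>i<length x'. ?b i)"
      proof (rule prod_first_zero)
        fix i assume i: "i < length x'" and nz: "\<forall>j<i. ?a j \<noteq> 0"
        have c: "consis G v \<sigma>1 (y @ take i x')" using cons[of i] i nz by simp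
        have lX: "last (u # take i x') = last (y @ take i x')" using lastyw by simp
        have cB: "last (u # take i x') \<in> B" using good c lX by simp
        show "?a i = ?b i"
        proof (rule trans_eq)
          show "last (u # take i x') \<in> B" by fact
          show "last (y @ take i x') = last (u # take i x')" using lX by simp
          show "u # take i x' \<noteq> []" by simp
          show "\<sigma>1' (u # take i x') = \<sigma>1 (y @ take i x')" if "last (u # take i x') \<in> V1 G"
            using KL[OF c that] .
          show "\<sigma>2' (u # take i x') = \<sigma>2 (y @ take i x')" if "last (u # take i x') \<in> V2 G"
            using \<sigma>2_hb[of "u # take i x'"] that cB yw by simp
        qed
      qed
      moreover have "hist_prob G v \<sigma>1 \<sigma>2 (y @ x') = p * (\<Prod>i<length x'. ?b i)"
        unfolding p_def by (rule hist_append[OF yne])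
      moreover have "hist_prob rg u \<sigma>1' \<sigma>2' ([u] @ x') = (\<Prod>i<length x'. ?a i)"
        using hist_append[of "[u]" rg u \<sigma>1' \<sigma>2' x'] by (simp add: hist_single)
      ultimately show ?thesis by simp
    qed
    define C where "C = sstart UNIV y"
    have CM: "C \<in> sets M" unfolding C_def using setsM by simp
    have eC: "emeasure M C = ennreal p" unfolding C_def p_def using cylM yne by simp
    define U where "U = uniform_measure M C"
    have Uprob: "prob_space U" unfolding U_def by (rule prob_space_uniform_measure) (use eC ppos in auto)
    have setsU: "sets U = sets (stream_space (count_space UNIV))" unfolding U_def using setsM by simp
    have spaceU: "space U = UNIV" using sets_eq_imp_space_eq[OF setsU] by (simp add: space_stream_space)
    have measU: "sdrop k \<in> measurable U (stream_space (count_space UNIV))"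
      using measurable_sdrop[of k "count_space UNIV"] by (subst measurable_cong_sets[OF setsU refl])
    define N where "N = distr U (stream_space (count_space UNIV)) (sdrop k)"
    have eN: "emeasure N X = emeasure M (C \<inter> sdrop k -` X) / ennreal p" if X: "X \<in> sets (stream_space (count_space UNIV))" for X
    proof -
      have "emeasure N X = emeasure U (sdrop k -` X \<inter> space U)" unfolding N_def by (rule emeasure_distr[OF measU X])
      also have "\<dots> = emeasure M (C \<inter> (sdrop k -` X \<inter> space U)) / emeasure M C"
        unfolding U_def
      proof (rule emeasure_uniform_measure[OF CM])
        show "sdrop k -` X \<inter> space (uniform_measure M C) \<in> sets M"
          using measurable_sets[OF measU X] setsU setsM unfolding U_def by simp
      qed
      finally show ?thesis using spaceU eC by simp
    qed
    have specN: "pspec rg u \<sigma>1' \<sigma>2' N"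
      unfolding pspec_def
    proof (intro conjI allI impI)
      show "prob_space N" unfolding N_def using Uprob measU by (rule prob_space.prob_space_distr)
      show "sets N = sets (stream_space (count_space UNIV))" unfolding N_def by simp
      fix x :: "'v list" assume xne: "x \<noteq> []"
      show "emeasure N (sstart UNIV x) = ennreal (hist_prob rg u \<sigma>1' \<sigma>2' x)"
      proof (cases "x ! 0 = u")
        case True
        then obtain x' where x: "x = u # x'" using xne by (cases x) auto
        have "C \<inter> sdrop k -` sstart UNIV x = sstart UNIV (y @ x')"
        proof -
          have "\<rho> \<in> C \<inter> sdrop k -` sstart UNIV x \<longleftrightarrow> \<rho> \<in> sstart UNIV (y @ x')" for \<rho>
            unfolding C_def x y_eq using sstart_append[of \<rho> hb "[u]"] sstart_append[of \<rho> hb "u # x'"] k_def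
            by auto
          then show ?thesis by blast
        qed
        then have "emeasure N (sstart UNIV x) = ennreal (hist_prob G v \<sigma>1 \<sigma>2 (y @ x')) / ennreal p"
          using eN[of "sstart UNIV x"] cylM[of "y @ x'"] yne by simp
        also have "\<dots> = ennreal (hist_prob rg u \<sigma>1' \<sigma>2' x)"
          using KC[of x'] ppos x by (simp add: divide_ennreal hist_prob_nonneg)
        finally show ?thesis .
      next
        case False
        have "C \<inter> sdrop k -` sstart UNIV x = {}"
        proof -
          have "\<rho> \<notin> C \<inter> sdrop k -` sstart UNIV x" for \<rho>
          proof
            assume r: "\<rho> \<in> C \<inter> sdrop k -` sstart UNIV x"
            then have "sdrop k \<rho> \<in> sstart UNIV [u]" using sstart_append[of \<rho> hb "[u]"] unfolding C_def y_eq k_def by blast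
            then have "\<rho> !! k = u" by simp
            moreover have "\<rho> !! k = x ! 0"
            proof -
              obtain a x'' where "x = a # x''" using xne by (cases x) auto
              then show ?thesis using r by simp
            qed
            ultimately show False using False by simp
          qed
          then show ?thesis by blast
        qed
        then show ?thesis using eN[of "sstart UNIV x"] False unfolding hist_prob_def by simp
      qed
    qed
    have "Pr rg u \<sigma>1' \<sigma>2' = N" by (rule Pr_eq[OF stoch_rg s1' s2' _ specN]) (simp add: rg_simps uB)
    moreover have "measure N ?P = 1"
    proof -
      have PM: "?P \<in> sets M" using prM measure_notin_sets[of ?P M] by fastforce
      have Ps: "?P \<in> sets (stream_space (count_space UNIV))" using PM setsM by simp
      have pre: "sdrop k -` ?P = ?P" by (auto simp: parity_sdrop)
      have "AE \<rho> in M. \<rho> \<in> ?P" using M.AE_in_set_eq_1[OF PM] prM by simp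
      then have "emeasure M (C \<inter> ?P) = emeasure M C"
        by (intro emeasure_eq_AE) (use CM PM in auto)
      then have e1: "emeasure N ?P = 1" using eN[OF Ps] pre eC ppos by (simp add: divide_ennreal)
      interpret N: prob_space N using specN unfolding pspec_def by blast
      show ?thesis using e1 by (simp add: N.emeasure_eq_measure)
    qed
    ultimately show ?thesis by simp
  qed
  have "u \<in> sas_region rg \<Omega>1 \<Omega>2" unfolding sas_region_def using uB s1' outB prB by (auto simp: rg_simps)
  then show ?thesis by blast
qed

end

theorem lemma5:
  fixes G :: "'v game" and \<Omega>1 \<Omega>2 :: "'v \<Rightarrow> nat" and d :: nat and A B :: "'v set"
  assumes "stoch_game G"
    and "d = Max (\<Omega>1 ` verts G)"
    and "odd d"
    and "A = PosAttr2 G {v \<in> verts G. \<Omega>1 v = d}"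
    and "B = verts G - A"
  shows "sas_region G \<Omega>1 \<Omega>2 = {} \<longleftrightarrow> sas_region (restrict_game G B) \<Omega>1 \<Omega>2 = {}"
proof -
  interpret trapctx G "{v \<in> verts G. \<Omega>1 v = d}" A B
    using assms by unfold_locales blast+
  show ?thesis
  proof
    assume e: "sas_region G \<Omega>1 \<Omega>2 = {}"
    show "sas_region (restrict_game G B) \<Omega>1 \<Omega>2 = {}"
    proof (rule ccontr)
      assume "sas_region (restrict_game G B) \<Omega>1 \<Omega>2 \<noteq> {}"
      then obtain u where "u \<in> sas_region (restrict_game G B) \<Omega>1 \<Omega>2" by blast
      then have "u \<in> sas_region G \<Omega>1 \<Omega>2" by (rule easy)
      then show False using e by blast
    qed
  next
    assume e: "sas_region (restrict_game G B) \<Omega>1 \<Omega>2 = {}"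
    show "sas_region G \<Omega>1 \<Omega>2 = {}"
    proof (rule ccontr)
      assume "sas_region G \<Omega>1 \<Omega>2 \<noteq> {}"
      then obtain v where "v \<in> sas_region G \<Omega>1 \<Omega>2" by blast
      then have "\<exists>u. u \<in> sas_region (restrict_game G B) \<Omega>1 \<Omega>2"
        using hard[OF assms(2) assms(3) refl] by blast
      then show False using e by blast
    qed
  qed
qed

end
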